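(* Let $\mathscr{D}(\mathbb{D})$ be the Dirichlet space of the unit disc. A linear map $R:\mathscr{D}(\mathbb{D})\to\mathscr{D}(\mathbb{D})$ is a bounded radial operator if and only if there exists a distribution $u\in\mathcal{D}'(\mathbb{T})$ with $(\hat u(m))_{m\in\mathbb{Z}_+}\in\ell^\infty(\mathbb{Z}_+)$ which induces an analytic function $g$ on $\mathbb{D}$ such that $$Rf(z)=\hat u(0)f(0)+z\int_{\mathbb{D}}f'(w)\,g'(z\bar w)\,dA(w)\quad\text{for all } f\in\mathscr{D}(\mathbb{D}),\ z\in\mathbb{D}.$$
   Context: $\mathbb{D}$ is the open unit disc, $dA$ the normalized area measure on $\mathbb{D}$, $\mathbb{Z}_+=\{0,1,2,\dots\}$. $\mathscr{D}(\mathbb{D})$ is the Hilbert space of holomorphic $f$ on $\mathbb{D}$ with $\|f\|^2=|f(0)|^2+\int_{\mathbb{D}}|f'|^2dA<\infty$; here $\|z^m\|^2=m$ for $m\ge1$ and $\|1\|=1$. For $\lambda\in\mathbb{T}=\{|\lambda|=1\}$, $V_\lambda f(z)=f(\lambda z)$; a bounded $R$ is radial if $RV_\lambda=V_\lambda R$ for all $\lambda\in\mathbb{T}$. $\mathcal{D}'(\mathbb{T})$ is the space of periodic distributions with Fourier coefficients $\hat u(m)$, $m\in\mathbb{Z}$. Induced functions are defined as for weighted Bergman spaces with the Dirichlet norm: for $0\le r<1$, $K_r$ is the distribution $\sum_{m\ge0}\|z^m\|^{-2}r^me^{im\theta}$, and $g$ is induced by $u$ if for every $r\in[0,1)$, $\theta\mapsto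 g(re^{i\theta})$ is the sum of the Fourier series of $K_r*u$, i.e. $g(z)=\sum_{m\ge0}\hat u(m)\|z^m\|^{-2}z^m$. *)

theory Defs
  imports "HOL-Analysis.Analysis"
begin

abbreviation disc :: "complex set" where "disc \<equiv> ball 0 1"

text \<open>Elements of the Dirichlet space are represented by holomorphic functions on the disc,
  normalised to be 0 outside the disc (so that equality of elements is equality of functions).\<close>
definition dirichlet_space :: "(complex \<Rightarrow> complex) set" where
  "dirichlet_space = {f. f holomorphic_on disc \<and> (\<forall>z. z \<notin> disc \<longrightarrow> f z = 0) \<and>
      set_integrable lborel disc (\<lambda>z. (cmod (deriv f z))\<^sup>2)}"

text \<open>Dirichlet norm, with dA = (Lebesgue area measure)/pi the normalised area measure.\<close>
definition dnorm :: "(complex \<Rightarrow> complex) \<Rightarrow> real" where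
  "dnorm f = sqrt ((cmod (f 0))\<^sup>2 + (LINT z:disc|lborel. (cmod (deriv f z))\<^sup>2) / pi)"

text \<open>Squared Dirichlet norm of the monomial z^m: m for m>=1, 1 for m=0.\<close>
definition mono_norm_sq :: "nat \<Rightarrow> real" where
  "mono_norm_sq m = (if m = 0 then 1 else real m)"

definition linear_on_dirichlet :: "((complex \<Rightarrow> complex) \<Rightarrow> (complex \<Rightarrow> complex)) \<Rightarrow> bool" where
  "linear_on_dirichlet R \<longleftrightarrow>
     (\<forall>f\<in>dirichlet_space. R f \<in> dirichlet_space) \<and>
     (\<forall>f\<in>dirichlet_space. \<forall>g\<in>dirichlet_space. R (\<lambda>z. f z + g z) = (\<lambda>z. R f z + R g z)) \<and>
     (\<forall>f\<in>dirichlet_space. \<forall>c. R (\<lambda>z. c * f z) = (\<lambda>z. c * R f z))"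

definition bounded_on_dirichlet :: "((complex \<Rightarrow> complex) \<Rightarrow> (complex \<Rightarrow> complex)) \<Rightarrow> bool" where
  "bounded_on_dirichlet R \<longleftrightarrow> (\<exists>C. \<forall>f\<in>dirichlet_space. dnorm (R f) \<le> C * dnorm f)"

definition rot :: "complex \<Rightarrow> (complex \<Rightarrow> complex) \<Rightarrow> (complex \<Rightarrow> complex)" where
  "rot l f = (\<lambda>z. f (l * z))"

definition radial_on_dirichlet :: "((complex \<Rightarrow> complex) \<Rightarrow> (complex \<Rightarrow> complex)) \<Rightarrow> bool" where
  "radial_on_dirichlet R \<longleftrightarrow>
     (\<forall>l. cmod l = 1 \<longrightarrow> (\<forall>f\<in>dirichlet_space. R (rot l f) = rot l (R f)))"

text \<open>Periodic distributions on T, represented by their Fourier coefficient sequences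
  (a sequence indexed by Z is the coefficient sequence of a periodic distribution iff it
  has at most polynomial growth).\<close>
definition periodic_distribution :: "(int \<Rightarrow> complex) \<Rightarrow> bool" where
  "periodic_distribution u \<longleftrightarrow> (\<exists>C N. \<forall>m. cmod (u m) \<le> C * (1 + real_of_int \<bar>m\<bar>) ^ N)"

definition induces :: "(int \<Rightarrow> complex) \<Rightarrow> (complex \<Rightarrow> complex) \<Rightarrow> bool" where
  "induces u g \<longleftrightarrow>
     (\<forall>z\<in>disc. (\<lambda>m. u (int m) / of_real (mono_norm_sq m) * z ^ m) sums g z)"

end

theory Submission
  imports Defs "HOL-Complex_Analysis.Complex_Analysis"
begin



lemma negl_borel_null:
  fixes N :: "complex set"
  assumes "negligible N" "N \<in> sets borel"
  shows "emeasure lborel N = 0"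
proof -
  have "N \<in> null_sets lebesgue" using assms(1) negligible_iff_null_sets by blast
  then have "N \<in> null_sets lborel" using null_sets_completion_iff[of N lborel] assms(2) by simp
  then show ?thesis by auto
qed

lemma rot_open_measure:
  fixes l :: complex
  assumes l: "cmod l = 1" and U: "open U"
  shows "emeasure lborel ((\<lambda>w. l * w) -` U) = emeasure lborel U"
proof -
  define K where "K = {(c::complex, r::real). 0 < r \<and> ball c r \<subseteq> U}"
  have cov: "\<exists>i. i \<in> K \<and> x \<in> ball (fst i) (snd i) \<and> snd i < d" if "x \<in> U" "0 < d" for x d
  proof -
    obtain e where e: "e > 0" "ball x e \<subseteq> U" using U \<open>x \<in> U\<close> open_contains_ball by blast
    show ?thesis
      by (rule exI[of _ "(x, min e (d/2))"]) (use e \<open>0 < d\<close> in \<open>auto simp: K_def\<close>)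
  qed
  obtain C where C: "countable C" "C \<subseteq> K"
     "pairwise (\<lambda>i j. disjnt (ball (fst i) (snd i)) (ball (fst j) (snd j))) C"
     "negligible(U - (\<Union>i \<in> C. ball (fst i) (snd i)))"
    using Vitali_covering_theorem_balls[of U K fst snd] cov by blast
  define B where "B = (\<Union>i \<in> C. ball (fst i) (snd i))"
  have BU: "B \<subseteq> U"
  proof
    fix x assume "x \<in> B"
    then obtain i where i: "i \<in> C" "x \<in> ball (fst i) (snd i)" by (auto simp: B_def)
    then have "i \<in> K" using C(2) by blast
    then have "ball (fst i) (snd i) \<subseteq> U" by (cases i) (auto simp: K_def)
    then show "x \<in> U" using i by blast
  qed
  have Bo: "open B" by (auto simp: B_def)
  have disj: "disjoint_family_on (\<lambda>i. ball (fst i) (snd i)) C"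
    using C(3) unfolding disjoint_family_on_def pairwise_def disjnt_def by blast
  define T where "T = (\<lambda>w::complex. l * w)"
  have cl: "cnj l * l = 1" using l by (metis complex_norm_square mult.commute of_real_1 power_one)
  have Tpre_ball: "T -` ball c r = ball (cnj l * c) r" for c r
  proof -
    have "cmod (c - l * w) = cmod (cnj l * c - w)" for w
    proof -
      have "cmod (c - l * w) = cmod (cnj l) * cmod (c - l * w)" using l by simp
      also have "\<dots> = cmod (cnj l * (c - l * w))" by (simp add: norm_mult)
      also have "cnj l * (c - l * w) = cnj l * c - w" using cl by (simp add: algebra_simps)
      finally show ?thesis .
    qed
    then show ?thesis by (auto simp: T_def dist_norm)
  qed
  have eqB: "emeasure lborel (T -` B) = emeasure lborel B"
  proof -
    have "T -` B = (\<Union>i\<in>C. T -` ball (fst i) (snd i))" by (auto simp: B_def)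
    then have "emeasure lborel (T -` B) = (\<integral>\<^sup>+ i. emeasure lborel (T -` ball (fst i) (snd i)) \<partial>count_space C)"
    proof -
      have d2: "disjoint_family_on (\<lambda>i. T -` ball (fst i) (snd i)) C"
        using disj unfolding disjoint_family_on_def by (auto simp flip: vimage_Int)
      show ?thesis unfolding \<open>T -` B = _\<close>
        by (rule emeasure_UN_countable) (use d2 C(1) in \<open>simp_all add: Tpre_ball\<close>)
    qed
    also have "\<dots> = (\<integral>\<^sup>+ i. emeasure lborel (ball (fst i) (snd i)) \<partial>count_space C)"
    proof (intro nn_integral_cong)
      fix i assume "i \<in> space (count_space C)"
      then have "snd i \<ge> 0" using C(2) by (auto simp: K_def)
      then show "emeasure lborel (T -` ball (fst i) (snd i)) = emeasure lborel (ball (fst i) (snd i))"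
        by (simp add: Tpre_ball emeasure_ball)
    qed
    also have "\<dots> = emeasure lborel B"
      unfolding B_def using disj C(1) by (subst emeasure_UN_countable) auto
    finally show ?thesis .
  qed
  have N0: "emeasure lborel (U - B) = 0"
    using negl_borel_null[of "U - B"] C(4) U Bo by (auto simp: B_def)
  have TN: "T -` (U - B) = (\<lambda>w. cnj l * w) ` (U - B)"
  proof -
    have e1: "cnj l * (l * x) = x" for x using cl by (simp add: mult.assoc[symmetric])
    have e2: "l * (cnj l * x) = x" for x using cl by (metis mult.assoc mult.commute mult_1)
    have "T -` S = (\<lambda>w. cnj l * w) ` S" for S
    proof
      show "T -` S \<subseteq> (\<lambda>w. cnj l * w) ` S"
      proof
        fix x assume "x \<in> T -` S"
        then have "l * x \<in> S" by (simp add: T_def)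
        then show "x \<in> (\<lambda>w. cnj l * w) ` S" using e1[of x] by (metis image_eqI)
      qed
      show "(\<lambda>w. cnj l * w) ` S \<subseteq> T -` S"
        unfolding T_def by (auto simp only: e2 vimage_eq image_iff)
    qed
    then show ?thesis .
  qed
  have negTN: "negligible (T -` (U - B))"
    unfolding TN
  proof (rule negligible_locally_Lipschitz_image)
    show "negligible (U - B)" using C(4) by (simp add: B_def)
    fix x assume "x \<in> U - B"
    show "\<exists>V M. open V \<and> x \<in> V \<and> (\<forall>y\<in>(U - B) \<inter> V. norm (cnj l * y - cnj l * x) \<le> M * norm (y - x))"
      by (rule exI[of _ UNIV], rule exI[of _ 1]) (use l in \<open>auto simp: norm_mult simp flip: right_diff_distrib\<close>)
  qed simp
  have TN0: "emeasure lborel (T -` (U - B)) = 0"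
  proof (rule negl_borel_null[OF negTN])
    have "continuous_on UNIV T" unfolding T_def by (intro continuous_intros)
    then have "T \<in> borel_measurable borel" by (rule borel_measurable_continuous_onI)
    moreover have "U - B \<in> sets borel" using U Bo by auto
    ultimately show "T -` (U - B) \<in> sets borel" using measurable_sets_borel by blast
  qed
  have "emeasure lborel (T -` U) = emeasure lborel (T -` B \<union> T -` (U - B))"
    using BU by (metis Diff_partition vimage_Un)
  also have "\<dots> = emeasure lborel (T -` B) + emeasure lborel (T -` (U - B))"
  proof (rule plus_emeasure[symmetric])
    have "continuous_on UNIV T" unfolding T_def by (intro continuous_intros)
    then have mT: "T \<in> borel_measurable borel" by (rule borel_measurable_continuous_onI)
    show "T -` B \<in> sets lborel" using measurable_sets_borel[OF mT] Bo by auto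
    show "T -` (U - B) \<in> sets lborel" using measurable_sets_borel[OF mT] Bo U by auto
  qed auto
  also have "\<dots> = emeasure lborel B" using eqB TN0 by simp
  also have "\<dots> = emeasure lborel B + emeasure lborel (U - B)" using N0 by simp
  also have "\<dots> = emeasure lborel U"
    using BU Bo U by (subst plus_emeasure) (auto simp: Un_absorb1)
  finally show ?thesis by (simp add: T_def)
qed

lemma distr_rot_lborel:
  fixes l :: complex
  assumes l: "cmod l = 1"
  shows "distr lborel borel (\<lambda>w. l * w) = (lborel :: complex measure)"
proof (rule measure_eqI_generator_eq[where E="{S. open S}" and \<Omega>=UNIV and A="\<lambda>i. ball 0 (real i)"])
  show "Int_stable {S :: complex set. open S}" by (auto simp: Int_stable_def)
  show "{S :: complex set. open S} \<subseteq> Pow UNIV" by auto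
  fix X :: "complex set" assume "X \<in> {S. open S}"
  then show "emeasure (distr lborel borel ((*) l)) X = emeasure lborel X"
    using rot_open_measure[OF l, of X] by (subst emeasure_distr) auto
next
  show "sets (distr lborel borel ((*) l)) = sigma_sets UNIV {S :: complex set. open S}"
    by (simp add: sets_borel)
  show "sets lborel = sigma_sets UNIV {S :: complex set. open S}"
    by (simp add: sets_borel)
  show "range (\<lambda>i. ball (0::complex) (real i)) \<subseteq> {S. open S}" by auto
  show "(\<Union>i. ball (0::complex) (real i)) = UNIV"
  proof (intro set_eqI iffI)
    fix x :: complex
    obtain n where "norm x < real n" using reals_Archimedean2 by blast
    then show "x \<in> (\<Union>i. ball 0 (real i))" by auto
  qed auto
  fix i :: nat
  show "emeasure (distr lborel borel ((*) l)) (ball 0 (real i)) \<noteq> \<infinity>"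
    using rot_open_measure[OF l, of "ball 0 (real i)"] emeasure_lborel_ball_finite[of "0::complex" "real i"]
    by (subst emeasure_distr) auto
qed




lemma ftc_poly_nn:
  fixes f F :: "real \<Rightarrow> real"
  assumes "a \<le> b" "\<And>x. a \<le> x \<Longrightarrow> x \<le> b \<Longrightarrow> (F has_real_derivative f x) (at x)"
    "\<And>x. a \<le> x \<Longrightarrow> x \<le> b \<Longrightarrow> 0 \<le> f x"
  shows "(\<integral>\<^sup>+ x. ennreal (f x) * indicator {a..b} x \<partial>lborel) = ennreal (F b - F a)"
proof (rule nn_integral_has_integral_lebesgue')
  show "(f has_integral F b - F a) {a..b}"
    using assms(1) by (intro fundamental_theorem_of_calculus)
      (auto simp flip: has_real_derivative_iff_has_vector_derivative intro!: DERIV_subset[OF assms(2)])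
qed (use assms in auto)

lemma layer_nn:
  fixes r :: real and k :: nat
  assumes r: "r \<ge> 0" and k: "k \<ge> 1"
  shows "(\<integral>\<^sup>+ w. ennreal (norm (w::complex) ^ (2*k)) * indicator (ball 0 r) w \<partial>lborel)
         = ennreal (pi * r ^ (2*k+2) / (k+1))"
proof -
  define c where "c = (\<lambda>s::real. 2 * real k * s ^ (2*k-1))"
  have c_nonneg: "s \<ge> 0 \<Longrightarrow> c s \<ge> 0" for s by (simp add: c_def)
  have step1: "ennreal (norm w ^ (2*k)) = (\<integral>\<^sup>+ s. ennreal (c s) * indicator {0..norm w} s \<partial>lborel)" for w :: complex
  proof -
    have "(\<integral>\<^sup>+ s. ennreal (c s) * indicator {0..norm w} s \<partial>lborel) = ennreal (norm w ^ (2*k) - 0 ^ (2*k))"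
      by (rule ftc_poly_nn[where F="\<lambda>s. s ^ (2*k)"])
         (use k in \<open>auto simp: c_def intro!: derivative_eq_intros\<close>)
    then show ?thesis using k by simp
  qed
  define G where "G = (\<lambda>(w::complex) (s::real). ennreal (c s) * indicator {0..norm w} s * indicator (ball 0 r) w)"
  have PSF: "pair_sigma_finite (lborel :: complex measure) (lborel :: real measure)"
    by (simp add: pair_sigma_finite_def sigma_finite_lborel)
  have Gm: "case_prod G \<in> borel_measurable (lborel \<Otimes>\<^sub>M lborel)"
  proof -
    have "case_prod G \<in> borel_measurable borel"
    proof -
      have cl: "closed {p :: complex \<times> real. 0 \<le> snd p \<and> snd p \<le> norm (fst p)}"
        by (intro closed_Collect_conj closed_Collect_le continuous_intros continuous_on_snd continuous_on_fst)
      have op: "open {p :: complex \<times> real. fst p \<in> ball 0 r}"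
        unfolding mem_ball by (intro open_Collect_less continuous_intros)
      have "case_prod G = (\<lambda>p. ennreal (c (snd p)) * indicator {p :: complex \<times> real. 0 \<le> snd p \<and> snd p \<le> norm (fst p)} p * indicator {p :: complex \<times> real. fst p \<in> ball 0 r} p)"
        by (auto simp: G_def fun_eq_iff split: split_indicator)
      also have "\<dots> \<in> borel_measurable borel"
      proof (intro borel_measurable_times_ennreal borel_measurable_indicator)
        have "continuous_on UNIV (\<lambda>p::complex\<times>real. c (snd p))" unfolding c_def by (intro continuous_intros)
        then have "(\<lambda>p::complex\<times>real. c (snd p)) \<in> borel_measurable borel" by (rule borel_measurable_continuous_onI)
        then show "(\<lambda>p::complex\<times>real. ennreal (c (snd p))) \<in> borel_measurable borel" by measurable
      qed (use cl op in auto)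
      finally show ?thesis .
    qed
    then show ?thesis
      by (simp add: measurable_cong_sets[OF sets_pair_measure_cong[OF sets_lborel sets_lborel] refl] lborel_prod)
  qed
  have "(\<integral>\<^sup>+ w. ennreal (norm (w::complex) ^ (2*k)) * indicator (ball 0 r) w \<partial>lborel)
        = (\<integral>\<^sup>+ w. (\<integral>\<^sup>+ s. G w s \<partial>lborel) \<partial>lborel)"
  proof (intro nn_integral_cong)
    fix w :: complex
    have m: "(\<lambda>s. ennreal (c s) * indicator {0..norm w} s) \<in> borel_measurable lborel" unfolding c_def by measurable
    show "ennreal (norm w ^ (2*k)) * indicator (ball 0 r) w = (\<integral>\<^sup>+ s. G w s \<partial>lborel)"
      unfolding step1[of w] G_def by (simp add: nn_integral_multc[OF m])
  qed
  also have "\<dots> = (\<integral>\<^sup>+ s. (\<integral>\<^sup>+ w. G w s \<partial>lborel) \<partial>lborel)"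
    using pair_sigma_finite.Fubini'[OF PSF Gm] by simp
  also have "\<dots> = (\<integral>\<^sup>+ s. ennreal (c s * pi * (r^2 - s^2)) * indicator {0..r} s \<partial>lborel)"
  proof (intro nn_integral_cong)
    fix s :: real
    have "(\<integral>\<^sup>+ w. G w s \<partial>lborel) = ennreal (c s) * indicator {0..} s * emeasure lborel ({w::complex. s \<le> norm w} \<inter> ball 0 r)"
    proof -
      have "(\<lambda>w. G w s) = (\<lambda>w. (ennreal (c s) * indicator {0..} s) * indicator ({w::complex. s \<le> norm w} \<inter> ball 0 r) w)"
        by (auto simp: G_def fun_eq_iff split: split_indicator)
      moreover have "{w::complex. s \<le> norm w} \<inter> ball 0 r \<in> sets lborel"
      proof -
        have "closed {w::complex. s \<le> norm w}" by (intro closed_Collect_le continuous_intros)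
        then show ?thesis by auto
      qed
      ultimately show ?thesis by (simp add: nn_integral_cmult_indicator)
    qed
    also have "\<dots> = ennreal (c s * pi * (r^2 - s^2)) * indicator {0..r} s"
    proof (cases "0 \<le> s \<and> s \<le> r")
      case True
      have eq: "{w::complex. s \<le> norm w} \<inter> ball 0 r = ball 0 r - ball (0::complex) s" by auto
      have "emeasure lborel (ball 0 r - ball (0::complex) s) = emeasure lborel (ball (0::complex) r) - emeasure lborel (ball (0::complex) s)"
        using True emeasure_lborel_ball_finite[of "0::complex" s] by (intro emeasure_Diff) auto
      also have "\<dots> = ennreal (pi * r^2) - ennreal (pi * s^2)"
        using True r by (simp add: emeasure_ball unit_ball_vol_2 DIM_complex)
      also have "\<dots> = ennreal (pi * (r^2 - s^2))"
        using True by (subst ennreal_minus) (auto simp: algebra_simps intro!: power_mono)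
      finally show ?thesis using True c_nonneg[of s] unfolding eq
        by (simp add: ennreal_mult' [symmetric] mult.assoc)
    next
      case False
      then consider "s < 0" | "s > r" by linarith
      then show ?thesis
      proof cases
        case 1 then show ?thesis by simp
      next
        case 2
        then have "{w::complex. s \<le> norm w} \<inter> ball 0 r = {}" by auto
        then show ?thesis using 2 by simp
      qed
    qed
    finally show "(\<integral>\<^sup>+ w. G w s \<partial>lborel) = ennreal (c s * pi * (r^2 - s^2)) * indicator {0..r} s" .
  qed
  also have "\<dots> = ennreal ((pi * (r^2 * r^(2*k) - real k / (real k + 1) * r^(2*k+2))) - (pi * (r^2 * 0^(2*k) - real k / (real k + 1) * 0^(2*k+2))))"
  proof (rule ftc_poly_nn[OF r])
    fix x assume x: "0 \<le> x" "x \<le> r"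
    show "0 \<le> c x * pi * (r^2 - x^2)" using x c_nonneg[of x] by (auto intro!: mult_nonneg_nonneg power_mono)
    have "2 * k - 1 + 2 = 2 * k + 1" using k by simp
    show "((\<lambda>x. pi * (r^2 * x^(2*k) - real k / (real k + 1) * x^(2*k+2))) has_real_derivative c x * pi * (r^2 - x^2)) (at x)"
    proof (rule DERIV_cong)
      show "((\<lambda>x. pi * (r^2 * x^(2*k) - real k / (real k + 1) * x^(2*k+2))) has_real_derivative
        pi * (r^2 * (real (2*k) * x^(2*k-1)) - real k / (real k + 1) * (real (2*k+2) * x^(2*k+1)))) (at x)"
      proof -
        have d1: "((\<lambda>x. x^(2*k)) has_real_derivative real (2*k) * x^(2*k - Suc 0)) (at x)" by (rule DERIV_pow)
        have d2: "((\<lambda>x. x^(2*k+2)) has_real_derivative real (2*k+2) * x^(2*k+2 - Suc 0)) (at x)" by (rule DERIV_pow)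
        show ?thesis using DERIV_cmult[OF DERIV_diff[OF DERIV_cmult[OF d1, of "r^2"] DERIV_cmult[OF d2, of "real k / (real k + 1)"]], of pi]
          by simp
      qed
      have "x^(2*k+1) = x^(2*k-1) * x^2" using k by (simp flip: power_add)
      then show "pi * (r^2 * (real (2*k) * x^(2*k-1)) - real k / (real k + 1) * (real (2*k+2) * x^(2*k+1))) = c x * pi * (r^2 - x^2)"
        by (simp add: c_def field_simps)
    qed
  qed
  also have "\<dots> = ennreal (pi * r ^ (2*k+2) / (k+1))"
  proof -
    have z: "(0::real)^(2*k) = 0" using k by simp
    show ?thesis by (simp only: z) (simp add: field_simps power_add power2_eq_square)
  qed
  finally show ?thesis .
qed




lemma layer_nn_all:
  fixes r :: real and k :: nat
  assumes r: "r \<ge> 0"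
  shows "(\<integral>\<^sup>+ w. ennreal (norm (w::complex) ^ (2*k)) * indicator (ball 0 r) w \<partial>lborel)
         = ennreal (pi * r ^ (2*k+2) / (k+1))"
proof (cases "k = 0")
  case True
  then show ?thesis using r by (simp add: emeasure_ball unit_ball_vol_2 mult.commute power2_eq_square)
qed (use layer_nn[OF r] in auto)

lemma cont_set_integrable_ball:
  fixes f :: "complex \<Rightarrow> 'b::{banach, second_countable_topology}"
  assumes "continuous_on (cball 0 r) f"
  shows "set_integrable lborel (ball 0 r) f"
proof -
  have "set_integrable lborel (cball 0 r) f"
    unfolding set_integrable_def by (rule borel_integrable_compact) (use assms in auto)
  then show ?thesis by (rule set_integrable_subset) auto
qed

lemma integral_ball_rot:
  fixes f :: "complex \<Rightarrow> complex"
  assumes l: "cmod l = 1" and f: "f \<in> borel_measurable borel"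
  shows "(LINT w:ball 0 r|lborel. f (l * w)) = (LINT w:ball 0 r|lborel. f w)"
proof -
  define g where "g = (\<lambda>w. indicator (ball 0 r) w *\<^sub>R f w)"
  have gm: "g \<in> borel_measurable borel" unfolding g_def using f by (intro borel_measurable_scaleR borel_measurable_indicator) auto
  have "(LINT w:ball 0 r|lborel. f w) = integral\<^sup>L (distr lborel borel (\<lambda>w. l * w)) g"
    by (simp add: distr_rot_lborel[OF l] g_def set_lebesgue_integral_def)
  also have "\<dots> = integral\<^sup>L lborel (\<lambda>w. g (l * w))"
    by (rule integral_distr) (use gm in auto)
  also have "\<dots> = (LINT w:ball 0 r|lborel. f (l * w))"
    unfolding set_lebesgue_integral_def g_def using l by (simp add: norm_mult indicator_def)
  finally show ?thesis ..
qed

lemma moment_ball: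
  fixes r :: real and n k :: nat
  assumes r: "r \<ge> 0"
  shows "(LINT w:ball 0 r|lborel. w ^ n * cnj w ^ k) = (if n = k then of_real (pi * r ^ (2*k+2) / (k+1)) else 0)"
proof (cases "n = k")
  case True
  have eq: "w ^ k * cnj w ^ k = complex_of_real (norm w ^ (2*k))" for w :: complex
  proof -
    have "w^k * cnj w^k = (w * cnj w)^k" by (simp add: power_mult_distrib)
    also have "\<dots> = (complex_of_real ((norm w)^2))^k" by (simp only: complex_norm_square)
    also have "\<dots> = complex_of_real (norm w ^ (2*k))" by (simp add: power_mult)
    finally show ?thesis .
  qed
  have int: "set_integrable lborel (ball 0 r) (\<lambda>w::complex. norm w ^ (2*k))"
    by (rule cont_set_integrable_ball) (intro continuous_intros)
  have "ennreal (LINT w:ball 0 r|lborel. norm (w::complex) ^ (2*k)) = (\<integral>\<^sup>+ w. ennreal (indicator (ball 0 r) w * norm (w::complex) ^ (2*k)) \<partial>lborel)"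
    unfolding set_lebesgue_integral_def using int unfolding set_integrable_def
    by (subst nn_integral_eq_integral) auto
  also have "\<dots> = (\<integral>\<^sup>+ w. ennreal (norm (w::complex) ^ (2*k)) * indicator (ball 0 r) w \<partial>lborel)"
    by (intro nn_integral_cong) (auto simp: indicator_def)
  also have "\<dots> = ennreal (pi * r ^ (2*k+2) / (k+1))" by (rule layer_nn_all[OF r])
  finally have "(LINT w:ball 0 r|lborel. norm (w::complex) ^ (2*k)) = pi * r ^ (2*k+2) / (k+1)"
    using r by (subst (asm) ennreal_inj) (auto simp: set_lebesgue_integral_def intro!: integral_nonneg)
  note val = this
  have "(LINT w:ball 0 r|lborel. w^n * cnj w^k) = (LINT w:ball 0 r|lborel. complex_of_real (norm (w::complex) ^ (2*k)))"
    using True by (simp only: eq)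
  also have "\<dots> = of_real (LINT w:ball 0 r|lborel. norm (w::complex) ^ (2*k))" by (rule set_integral_complex_of_real)
  also have "\<dots> = of_real (pi * r ^ (2*k+2) / (k+1))" by (simp only: val)
  finally show ?thesis using True by simp
next
  case False
  define a where "a = pi / (real n - real k)"
  define l where "l = cis a"
  have l1: "cmod l = 1" by (simp add: l_def)
  have lnk: "l ^ n * cnj l ^ k = -1"
  proof -
    have "l ^ n * cnj l ^ k = cis (real n * a) * cis (- (real k * a))"
      by (simp add: l_def cis_cnj Complex.DeMoivre)
    also have "\<dots> = cis ((real n - real k) * a)" by (simp add: cis_mult algebra_simps)
    also have "(real n - real k) * a = pi" using False by (simp add: a_def)
    finally show ?thesis by simp
  qed
  define I where "I = (LINT w:ball 0 r|lborel. w ^ n * cnj w ^ k)"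
  have "I = (LINT w:ball 0 r|lborel. (l * w) ^ n * cnj (l * w) ^ k)"
    unfolding I_def by (rule integral_ball_rot[OF l1, symmetric]) (intro borel_measurable_continuous_onI continuous_intros)
  also have "\<dots> = (LINT w:ball 0 r|lborel. (l ^ n * cnj l ^ k) * (w ^ n * cnj w ^ k))"
    by (simp add: power_mult_distrib mult_ac)
  also have "\<dots> = - I" unfolding lnk I_def set_lebesgue_integral_def by simp
  finally have "I = 0" by simp
  then show ?thesis using False by (simp add: I_def)
qed




lemma ball_series_integral:
  fixes u :: "nat \<Rightarrow> complex \<Rightarrow> complex"
  assumes r: "r \<ge> 0" and cont: "\<And>i. continuous_on (cball 0 r) (u i)"
    and bnd: "\<And>i w. w \<in> cball 0 r \<Longrightarrow> norm (u i w) \<le> M i" and sM: "summable M"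
    and s: "\<And>w. w \<in> ball 0 r \<Longrightarrow> (\<lambda>i. u i w) sums S w"
  shows "(\<lambda>i. LINT w:ball 0 r|lborel. u i w) sums (LINT w:ball 0 r|lborel. S w)"
proof -
  define F where "F = (\<lambda>i w. indicator (ball 0 r) w *\<^sub>R u i w)"
  have intF: "integrable lborel (F i)" for i
    using cont_set_integrable_ball[OF cont[of i]] unfolding set_integrable_def F_def .
  have normF: "norm (F i w) \<le> indicator (ball 0 r) w * M i" for i w
    using bnd[of w i] by (auto simp: F_def indicator_def)
  have M0: "M i \<ge> 0" for i using bnd[of 0 i] r by (smt (verit) centre_in_cball norm_ge_zero)
  have AE: "AE w in lborel. summable (\<lambda>i. norm (F i w))"
  proof (rule AE_I2)
    fix w :: complex
    show "summable (\<lambda>i. norm (F i w))"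
    proof (cases "w \<in> ball 0 r")
      case True
      show ?thesis
      proof (rule summable_comparison_test[OF _ sM], intro exI allI impI)
        fix n :: nat
        show "norm (norm (F n w)) \<le> M n" using normF[of n w] True by simp
      qed
    qed (simp add: F_def)
  qed
  have meas: "integral\<^sup>L lborel (\<lambda>w. indicator (ball (0::complex) r) w * M i) = M i * measure lborel (ball (0::complex) r)" for i
    by (simp add: emeasure_lborel_ball_finite mult.commute)
  have sI: "summable (\<lambda>i. integral\<^sup>L lborel (\<lambda>w. norm (F i w)))"
  proof (rule summable_comparison_test[where g="\<lambda>i. M i * measure lborel (ball (0::complex) r)"])
    show "summable (\<lambda>i. M i * measure lborel (ball (0::complex) r))"
      by (rule summable_mult2[OF sM])
    show "\<exists>N. \<forall>n\<ge>N. norm (integral\<^sup>L lborel (\<lambda>w. norm (F n w))) \<le> M n * measure lborel (ball (0::complex) r)"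
    proof (intro exI allI impI)
      fix n :: nat
      have "integral\<^sup>L lborel (\<lambda>w. norm (F n w)) \<le> integral\<^sup>L lborel (\<lambda>w. indicator (ball (0::complex) r) w * M n)"
        by (intro integral_mono normF integrable_norm intF)
           (use emeasure_lborel_ball_finite[of "0::complex" r] in \<open>simp add: integrable_indicator_iff\<close>)
      then show "norm (integral\<^sup>L lborel (\<lambda>w. norm (F n w))) \<le> M n * measure lborel (ball (0::complex) r)"
        using meas[of n] by (simp add: integral_nonneg mult.commute)
    qed
  qed
  have "(\<lambda>i. integral\<^sup>L lborel (F i)) sums (\<integral>w. (\<Sum>i. F i w) \<partial>lborel)"
    by (rule sums_integral[OF intF AE sI])
  moreover have "(\<Sum>i. F i w) = indicator (ball 0 r) w *\<^sub>R S w" for w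
  proof (cases "w \<in> ball 0 r")
    case True
    then show ?thesis using s[OF True] by (simp add: F_def sums_iff)
  qed (simp add: F_def)
  ultimately show ?thesis by (simp add: F_def set_lebesgue_integral_def)
qed




definition cf :: "(complex \<Rightarrow> complex) \<Rightarrow> nat \<Rightarrow> complex" where
  "cf h n = (deriv ^^ n) h 0 / fact n"

lemma cf_series:
  assumes "h holomorphic_on disc" "z \<in> disc"
  shows "(\<lambda>n. cf h n * z ^ n) sums h z"
  using holomorphic_power_series[OF assms] by (simp add: cf_def)

lemma cf_unique:
  assumes "\<And>z. z \<in> disc \<Longrightarrow> (\<lambda>n. c n * z ^ n) sums h z"
  shows "cf h n = c n"
proof -
  define F where "F = Abs_fps c"
  have "summable (\<lambda>n. c n * (1/2) ^ n)" using assms[of "1/2"] sums_summable by auto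
  then have "conv_radius c \<ge> ereal (norm (1/2::complex))" by (rule conv_radius_geI)
  then have rad: "fps_conv_radius F > 0"
    unfolding F_def fps_conv_radius_def by (simp add: order_less_le_trans[rotated])
  have "eventually (\<lambda>z. z \<in> disc) (nhds (0::complex))"
    by (rule eventually_nhds_in_open) auto
  then have ev: "eventually (\<lambda>z. eval_fps F z = h z) (nhds 0)"
    by eventually_elim (use assms in \<open>auto simp: F_def eval_fps_def sums_iff\<close>)
  have "h has_fps_expansion F" using rad ev by (simp add: has_fps_expansion_def)
  from fps_nth_fps_expansion[OF this, of n] show ?thesis by (simp add: F_def cf_def)
qed

lemma cf_deriv: "cf (deriv h) n = of_nat (Suc n) * cf h (Suc n)"
proof -
  have "(deriv ^^ n) (deriv h) = (deriv ^^ Suc n) h"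
    by (simp only: funpow_Suc_right o_def)
  then show ?thesis by (simp add: cf_def fact_Suc field_simps del: of_nat_Suc)
qed

lemma cf_0 [simp]: "cf h 0 = h 0" by (simp add: cf_def)

lemma abs_summ:
  fixes z :: complex
  assumes "h holomorphic_on disc" "norm z < 1"
  shows "summable (\<lambda>n. norm (cf h n) * norm z ^ n)"
proof -
  define x where "x = complex_of_real ((1 + norm z) / 2)"
  have nx: "norm x = (1 + norm z) / 2" unfolding x_def by (subst norm_of_real) simp
  have "x \<in> disc" using assms(2) nx by simp
  then have "summable (\<lambda>n. cf h n * x ^ n)" using cf_series[OF assms(1)] sums_summable by blast
  moreover have "norm z < norm x" using assms(2) nx by simp
  ultimately have "summable (\<lambda>n. norm (cf h n * z ^ n))" by (rule powser_insidea)
  then show ?thesis by (simp add: norm_mult norm_power)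
qed

lemma sub_moment:
  assumes h: "h holomorphic_on disc" and r: "0 \<le> r" "r < 1"
  shows "(LINT w:ball 0 r|lborel. h w * cnj w ^ k) = of_real (pi * r^(2*k+2) / (k+1)) * cf h k"
proof -
  define C where "C = complex_of_real (pi * r^(2*k+2) / (k+1))"
  have "(\<lambda>i. LINT w:ball 0 r|lborel. cf h i * w ^ i * cnj w ^ k) sums (LINT w:ball 0 r|lborel. h w * cnj w ^ k)"
  proof (rule ball_series_integral[where M="\<lambda>i. norm (cf h i) * r ^ i * r ^ k"])
    show "summable (\<lambda>i. norm (cf h i) * r ^ i * r ^ k)"
      using abs_summ[OF h, of "of_real r"] r by (intro summable_mult2) simp
    fix i w assume w: "w \<in> cball (0::complex) r"
    then have "norm w \<le> r" by simp
    then show "norm (cf h i * w ^ i * cnj w ^ k) \<le> norm (cf h i) * r ^ i * r ^ k"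
      using r by (simp add: norm_mult norm_power) (auto intro!: mult_mono power_mono mult_nonneg_nonneg)
  next
    fix w :: complex assume "w \<in> ball 0 r"
    then have "w \<in> disc" using r by simp
    then show "(\<lambda>i. cf h i * w ^ i * cnj w ^ k) sums (h w * cnj w ^ k)"
      using cf_series[OF h] by (intro sums_mult2) auto
  qed (use r in \<open>auto intro!: continuous_intros\<close>)
  moreover have "(LINT w:ball 0 r|lborel. cf h i * w ^ i * cnj w ^ k) = (if i = k then cf h k * C else 0)" for i
    using moment_ball[OF r(1), of i k] by (simp add: mult.assoc C_def)
  ultimately have "(\<lambda>i. if i = k then cf h k * C else 0) sums (LINT w:ball 0 r|lborel. h w * cnj w ^ k)"
    by simp
  moreover have "(\<lambda>i. if i = k then cf h k * C else 0) sums (cf h k * C)"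
    using sums_single[of k "\<lambda>_. cf h k * C"] by simp
  ultimately show ?thesis by (simp add: sums_unique2 C_def mult.commute)
qed





lemma D_holo: "f \<in> dirichlet_space \<Longrightarrow> f holomorphic_on disc"
  by (simp add: dirichlet_space_def)
lemma D_out: "f \<in> dirichlet_space \<Longrightarrow> z \<notin> disc \<Longrightarrow> f z = 0"
  by (simp add: dirichlet_space_def)
lemma D_int: "f \<in> dirichlet_space \<Longrightarrow> set_integrable lborel disc (\<lambda>z. (cmod (deriv f z))\<^sup>2)"
  by (simp add: dirichlet_space_def)

lemma deriv_times_integrable:
  assumes f: "f \<in> dirichlet_space" and phi: "continuous_on disc phi" and K: "\<And>w. w \<in> disc \<Longrightarrow> norm (phi w) \<le> K"
  shows "set_integrable lborel disc (\<lambda>w. deriv f w * phi w)"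
proof -
  have hd: "deriv f holomorphic_on disc" using D_holo[OF f] by (rule holomorphic_deriv) auto
  then have cd: "continuous_on disc (deriv f)" by (rule holomorphic_on_imp_continuous_on)
  have K0: "K \<ge> 0" using K[of 0] norm_ge_zero[of "phi 0"] by (simp del: norm_ge_zero)
  have i1: "integrable lborel (\<lambda>w::complex. indicator disc w * K)"
    using emeasure_lborel_ball_finite[of "0::complex" 1] by (simp add: integrable_indicator_iff)
  have i2: "integrable lborel (\<lambda>w. indicator disc w * (cmod (deriv f w))\<^sup>2)"
    using D_int[OF f] unfolding set_integrable_def by simp
  show ?thesis unfolding set_integrable_def
  proof (rule Bochner_Integration.integrable_bound[where f="\<lambda>w. indicator disc w * K + K * (indicator disc w * (cmod (deriv f w))\<^sup>2)"])
    show "integrable lborel (\<lambda>w. indicator disc w * K + K * (indicator disc w * (cmod (deriv f w))\<^sup>2))"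
      by (rule Bochner_Integration.integrable_add[OF i1 Bochner_Integration.integrable_mult_right[OF i2]])
    show "(\<lambda>w. indicator disc w *\<^sub>R (deriv f w * phi w)) \<in> borel_measurable lborel"
      using borel_measurable_continuous_on_indicator[of disc "\<lambda>w. deriv f w * phi w"] cd phi
      by (auto intro: continuous_on_mult)
    show "AE w in lborel. norm (indicator disc w *\<^sub>R (deriv f w * phi w)) \<le> norm (indicator disc w * K + K * (indicator disc w * (cmod (deriv f w))\<^sup>2))"
    proof (rule AE_I2)
      fix w :: complex
      show "norm (indicator disc w *\<^sub>R (deriv f w * phi w)) \<le> norm (indicator disc w * K + K * (indicator disc w * (cmod (deriv f w))\<^sup>2))"
      proof (cases "w \<in> disc")
        case True
        have a: "cmod (deriv f w) \<le> 1 + (cmod (deriv f w))\<^sup>2"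
        proof -
          define t where "t = cmod (deriv f w)"
          have e: "(t - 1)^2 = t^2 - 2*t + 1" by (simp add: power2_eq_square algebra_simps)
          have "0 \<le> (t - 1)^2" "0 \<le> t" by (auto simp: t_def)
          then have "t \<le> 1 + t^2" using e by linarith
          then show ?thesis by (simp add: t_def)
        qed
        have "norm (deriv f w * phi w) \<le> cmod (deriv f w) * K"
          unfolding norm_mult by (rule mult_left_mono[OF K[OF True] norm_ge_zero])
        also have "\<dots> \<le> (1 + (cmod (deriv f w))\<^sup>2) * K" by (rule mult_right_mono[OF a K0])
        finally show ?thesis using True K0 by (simp add: algebra_simps)
      qed simp
    qed
  qed
qed

lemma disc_moment:
  assumes f: "f \<in> dirichlet_space"
  shows "(LINT w:disc|lborel. deriv f w * cnj w ^ k) = pi * cf f (Suc k)"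
proof -
  have hd: "deriv f holomorphic_on disc" using D_holo[OF f] by (rule holomorphic_deriv) auto
  define \<rho> where "\<rho> = (\<lambda>i::nat. real i / real (Suc i))"
  have \<rho>0: "0 \<le> \<rho> i" "\<rho> i < 1" for i by (auto simp: \<rho>_def)
  have \<rho>lim: "\<rho> \<longlonglongrightarrow> 1" unfolding \<rho>_def by (rule LIMSEQ_n_over_Suc_n)
  have inc: "incseq (\<lambda>i. ball (0::complex) (\<rho> i))"
  proof (rule incseq_SucI)
    fix i show "ball (0::complex) (\<rho> i) \<subseteq> ball 0 (\<rho> (Suc i))"
      by (rule subset_ball) (simp add: \<rho>_def field_simps)
  qed
  have un: "(\<Union>i. ball (0::complex) (\<rho> i)) = disc"
  proof (intro set_eqI iffI)
    fix w :: complex assume "w \<in> disc"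
    then have "norm w < 1" by simp
    then have "eventually (\<lambda>i. norm w < \<rho> i) sequentially" using order_tendstoD(1)[OF \<rho>lim] by blast
    then obtain i where "norm w < \<rho> i" by (meson eventually_sequentially order.refl)
    then show "w \<in> (\<Union>i. ball 0 (\<rho> i))" by auto
  next
    fix w :: complex assume "w \<in> (\<Union>i. ball 0 (\<rho> i))"
    then obtain i where "norm w < \<rho> i" by auto
    then show "w \<in> disc" using \<rho>0(2)[of i] by simp
  qed
  have int: "set_integrable lborel disc (\<lambda>w. deriv f w * cnj w ^ k)"
    by (rule deriv_times_integrable[OF f, where K=1]) (auto intro!: continuous_intros simp: norm_power power_le_one)
  have "(\<lambda>i. LINT w:ball 0 (\<rho> i)|lborel. deriv f w * cnj w ^ k) \<longlonglongrightarrow> (LINT w:(\<Union>i. ball 0 (\<rho> i))|lborel. deriv f w * cnj w ^ k)"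
    by (rule set_integral_cont_up) (use inc int un in auto)
  then have L1: "(\<lambda>i. LINT w:ball 0 (\<rho> i)|lborel. deriv f w * cnj w ^ k) \<longlonglongrightarrow> (LINT w:disc|lborel. deriv f w * cnj w ^ k)"
    by (simp add: un)
  have "(\<lambda>i. LINT w:ball 0 (\<rho> i)|lborel. deriv f w * cnj w ^ k) = (\<lambda>i. of_real (pi * \<rho> i^(2*k+2) / (k+1)) * cf (deriv f) k)"
    using sub_moment[OF hd \<rho>0] by simp
  moreover have "(\<lambda>i. of_real (pi * \<rho> i^(2*k+2) / (k+1)) * cf (deriv f) k) \<longlonglongrightarrow> of_real (pi * 1^(2*k+2) / (k+1)) * cf (deriv f) k"
    by (intro tendsto_intros \<rho>lim) auto
  ultimately have L2: "(\<lambda>i. LINT w:ball 0 (\<rho> i)|lborel. deriv f w * cnj w ^ k) \<longlonglongrightarrow> of_real (pi / (k+1)) * cf (deriv f) k"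
    by simp
  have "(LINT w:disc|lborel. deriv f w * cnj w ^ k) = of_real (pi / (k+1)) * cf (deriv f) k"
    using L1 L2 by (rule LIMSEQ_unique)
  also have "\<dots> = pi * cf f (Suc k)"
    by (simp add: cf_deriv field_simps del: of_nat_Suc)
  finally show ?thesis .
qed




definition rho :: "nat \<Rightarrow> real" where "rho i = real i / real (Suc i)"

lemma rho_props:
  shows "\<And>i. 0 \<le> rho i" "\<And>i. rho i < 1" "rho \<longlonglongrightarrow> 1"
    "incseq (\<lambda>i. ball (0::complex) (rho i))" "(\<Union>i. ball (0::complex) (rho i)) = disc"
proof -
  show \<rho>0: "0 \<le> rho i" "rho i < 1" for i by (auto simp: rho_def)
  show \<rho>lim: "rho \<longlonglongrightarrow> 1" unfolding rho_def by (rule LIMSEQ_n_over_Suc_n)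
  show "incseq (\<lambda>i. ball (0::complex) (rho i))"
  proof (rule incseq_SucI)
    fix i show "ball (0::complex) (rho i) \<subseteq> ball 0 (rho (Suc i))"
      by (rule subset_ball) (simp add: rho_def field_simps)
  qed
  show "(\<Union>i. ball (0::complex) (rho i)) = disc"
  proof (intro set_eqI iffI)
    fix w :: complex assume "w \<in> disc"
    then have "norm w < 1" by simp
    then have "eventually (\<lambda>i. norm w < rho i) sequentially" using order_tendstoD(1)[OF \<rho>lim] by blast
    then obtain i where "norm w < rho i" by (meson eventually_sequentially order.refl)
    then show "w \<in> (\<Union>i. ball 0 (rho i))" by auto
  next
    fix w :: complex assume "w \<in> (\<Union>i. ball 0 (rho i))"
    then obtain i where "norm w < rho i" by auto
    then show "w \<in> disc" using \<rho>0(2)[of i] by simp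
  qed
qed

lemma sub_parseval:
  assumes f: "f \<in> dirichlet_space" and r: "0 \<le> r" "r < 1"
  shows "(\<lambda>k. pi * r^(2*k+2) * (real (Suc k) * (cmod (cf f (Suc k)))\<^sup>2)) sums (LINT w:ball 0 r|lborel. (cmod (deriv f w))\<^sup>2)"
proof -
  have hd: "deriv f holomorphic_on disc" using D_holo[OF f] by (rule holomorphic_deriv) auto
  define b where "b = cf (deriv f)"
  have cb: "cball 0 r \<subseteq> disc" using r by auto
  have cont: "continuous_on (cball 0 r) (deriv f)"
    using holomorphic_on_imp_continuous_on[OF hd] cb by (rule continuous_on_subset)
  obtain Mf where Mf: "\<And>w. w \<in> cball 0 r \<Longrightarrow> norm (deriv f w) \<le> Mf"
    using compact_imp_bounded[OF compact_continuous_image[OF cont compact_cball]]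
    unfolding bounded_iff by blast
  have A: "(\<lambda>k. LINT w:ball 0 r|lborel. deriv f w * (cnj (b k) * cnj w ^ k)) sums (LINT w:ball 0 r|lborel. deriv f w * cnj (deriv f w))"
  proof (rule ball_series_integral[where M="\<lambda>k. Mf * (norm (b k) * r ^ k)"])
    show "summable (\<lambda>k. Mf * (norm (b k) * r ^ k))"
      using abs_summ[OF hd, of "of_real r"] r unfolding b_def by (intro summable_mult) simp
    fix k w assume w: "w \<in> cball (0::complex) r"
    then have "norm w \<le> r" by simp
    then have "norm (cnj (b k) * cnj w ^ k) \<le> norm (b k) * r ^ k"
      by (simp add: norm_mult norm_power) (auto intro!: mult_left_mono power_mono)
    then show "norm (deriv f w * (cnj (b k) * cnj w ^ k)) \<le> Mf * (norm (b k) * r ^ k)"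
      using Mf[OF w] unfolding norm_mult[of "deriv f w"] by (intro mult_mono Mf w) (auto intro: order_trans[OF norm_ge_zero])
  next
    fix w :: complex assume "w \<in> ball 0 r"
    then have "w \<in> disc" using r by simp
    then have "(\<lambda>k. b k * w ^ k) sums deriv f w" using cf_series[OF hd] by (simp add: b_def)
    then have "(\<lambda>k. cnj (b k * w ^ k)) sums cnj (deriv f w)" by (simp only: sums_cnj)
    then show "(\<lambda>k. deriv f w * (cnj (b k) * cnj w ^ k)) sums (deriv f w * cnj (deriv f w))"
      by (intro sums_mult) simp
  qed (use r cont in \<open>auto intro!: continuous_intros\<close>)
  have B: "(LINT w:ball 0 r|lborel. deriv f w * (cnj (b k) * cnj w ^ k))
      = of_real (pi * r^(2*k+2) * (real (Suc k) * (cmod (cf f (Suc k)))\<^sup>2))" for k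
  proof -
    have "(LINT w:ball 0 r|lborel. deriv f w * (cnj (b k) * cnj w ^ k)) = cnj (b k) * (LINT w:ball 0 r|lborel. deriv f w * cnj w ^ k)"
      by (simp add: mult_ac)
    also have "\<dots> = cnj (b k) * (of_real (pi * r^(2*k+2) / (k+1)) * b k)"
      using sub_moment[OF hd r] by (simp add: b_def)
    also have "\<dots> = of_real (pi * r^(2*k+2) / (k+1)) * (b k * cnj (b k))" by (simp add: mult_ac)
    also have "\<dots> = of_real (pi * r^(2*k+2) / (k+1) * (cmod (b k))\<^sup>2)" by (simp flip: complex_norm_square)
    also have "(cmod (b k))\<^sup>2 = (real (Suc k))\<^sup>2 * (cmod (cf f (Suc k)))\<^sup>2"
      by (simp add: b_def cf_deriv norm_mult power_mult_distrib del: of_nat_Suc)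
    also have "pi * r^(2*k+2) / (k+1) * ((real (Suc k))\<^sup>2 * (cmod (cf f (Suc k)))\<^sup>2) = pi * r^(2*k+2) * (real (Suc k) * (cmod (cf f (Suc k)))\<^sup>2)"
      by (simp add: power2_eq_square field_simps del: of_nat_Suc)
    finally show ?thesis .
  qed
  have C: "(LINT w:ball 0 r|lborel. deriv f w * cnj (deriv f w)) = of_real (LINT w:ball 0 r|lborel. (cmod (deriv f w))\<^sup>2)"
    by (simp flip: complex_norm_square set_integral_complex_of_real)
  from A have "(\<lambda>k. complex_of_real (pi * r^(2*k+2) * (real (Suc k) * (cmod (cf f (Suc k)))\<^sup>2))) sums complex_of_real (LINT w:ball 0 r|lborel. (cmod (deriv f w))\<^sup>2)"
    unfolding B C .
  then show ?thesis by (rule sums_of_real_iff[THEN iffD1])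
qed




lemma parseval:
  assumes f: "f \<in> dirichlet_space"
  shows "(\<lambda>n. real n * (cmod (cf f n))\<^sup>2) sums ((LINT w:disc|lborel. (cmod (deriv f w))\<^sup>2) / pi)"
proof -
  define L where "L = (LINT w:disc|lborel. (cmod (deriv f w))\<^sup>2)"
  define c where "c = (\<lambda>k. pi * (real (Suc k) * (cmod (cf f (Suc k)))\<^sup>2))"
  define S where "S = (\<lambda>i. LINT w:ball 0 (rho i)|lborel. (cmod (deriv f w))\<^sup>2)"
  have c0: "c k \<ge> 0" for k by (simp add: c_def)
  have sS: "(\<lambda>k. c k * rho i ^ (2*k+2)) sums S i" for i
    using sub_parseval[OF f rho_props(1,2)] unfolding S_def c_def by (simp add: mult_ac)
  have intD: "set_integrable lborel disc (\<lambda>w. (cmod (deriv f w))\<^sup>2)" by (rule D_int[OF f])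
  have SL: "S i \<le> L" for i
  proof -
    have sub: "ball 0 (rho i) \<subseteq> disc" using rho_props(2)[of i] by auto
    have "set_integrable lborel (ball 0 (rho i)) (\<lambda>w. (cmod (deriv f w))\<^sup>2)"
      by (rule set_integrable_subset[OF intD]) (use sub in auto)
    then show ?thesis unfolding S_def L_def set_lebesgue_integral_def
      using intD unfolding set_integrable_def
      by (intro integral_mono) (use sub in \<open>auto simp: indicator_def\<close>)
  qed
  have partial: "(\<Sum>k<N. c k) \<le> L" for N
  proof -
    have lim: "(\<lambda>i. \<Sum>k<N. c k * rho i ^ (2*k+2)) \<longlonglongrightarrow> (\<Sum>k<N. c k * 1 ^ (2*k+2))"
      by (intro tendsto_intros rho_props(3))
    have "(\<Sum>k<N. c k * rho i ^ (2*k+2)) \<le> L" for i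
    proof -
      have "(\<Sum>k<N. c k * rho i ^ (2*k+2)) \<le> S i"
        using sum_le_suminf[OF sums_summable[OF sS[of i]], of "{..<N}"] sums_unique[OF sS[of i]] c0 rho_props(1)[of i]
        by auto
      then show ?thesis using SL[of i] by linarith
    qed
    then show ?thesis using LIMSEQ_le_const2[OF lim] by auto
  qed
  have sc: "summable c"
  proof (rule bounded_imp_summable[where B=L])
    fix n show "(\<Sum>k\<le>n. c k) \<le> L" using partial[of "Suc n"] by (simp only: lessThan_Suc_atMost)
  qed (use c0 in auto)
  have cL: "suminf c \<le> L" using suminf_le_const[OF sc partial] .
  have Sc: "S i \<le> suminf c" for i
  proof -
    have "S i = (\<Sum>k. c k * rho i ^ (2*k+2))" using sS[of i] by (simp add: sums_iff)
    also have "\<dots> \<le> suminf c"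
    proof (rule suminf_le)
      fix k show "c k * rho i ^ (2*k+2) \<le> c k"
      proof -
        have "rho i ^ (2*k+2) \<le> 1" using rho_props(1,2)[of i] by (intro power_le_one) auto
        then show ?thesis using c0[of k] by (rule mult_left_le)
      qed
    qed (use sS sums_summable sc in auto)
    finally show ?thesis .
  qed
  have SlimL: "S \<longlonglongrightarrow> L"
  proof -
    have "(\<lambda>i. LINT w:ball 0 (rho i)|lborel. (cmod (deriv f w))\<^sup>2) \<longlonglongrightarrow> (LINT w:(\<Union>i. ball 0 (rho i))|lborel. (cmod (deriv f w))\<^sup>2)"
      by (rule set_integral_cont_up) (use rho_props(4,5) intD in auto)
    then show ?thesis unfolding S_def L_def rho_props(5) .
  qed
  have "L \<le> suminf c" using LIMSEQ_le_const2[OF SlimL] Sc by auto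
  with cL have "suminf c = L" by simp
  with sc have "c sums L" by (simp add: sums_iff)
  then have "(\<lambda>n. pi * (real n * (cmod (cf f n))\<^sup>2)) sums (L + 0)"
    using sums_Suc_iff[of "\<lambda>n. pi * (real n * (cmod (cf f n))\<^sup>2)" L] by (simp add: c_def)
  then have "(\<lambda>n. pi * (real n * (cmod (cf f n))\<^sup>2) / pi) sums (L / pi)"
    by (intro sums_divide) simp
  then show ?thesis by (simp add: L_def)
qed

lemma dnorm_formula:
  assumes f: "f \<in> dirichlet_space"
  shows "(dnorm f)\<^sup>2 = (cmod (f 0))\<^sup>2 + (\<Sum>n. real n * (cmod (cf f n))\<^sup>2)"
    "summable (\<lambda>n. real n * (cmod (cf f n))\<^sup>2)"
proof -
  have s: "(\<lambda>n. real n * (cmod (cf f n))\<^sup>2) sums ((LINT w:disc|lborel. (cmod (deriv f w))\<^sup>2) / pi)"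
    by (rule parseval[OF f])
  have nn: "0 \<le> (LINT w:disc|lborel. (cmod (deriv f w))\<^sup>2) / pi"
    using sums_le[OF _ sums_zero s] by (metis mult_nonneg_nonneg of_nat_0_le_iff zero_le_power2)
  show "(dnorm f)\<^sup>2 = (cmod (f 0))\<^sup>2 + (\<Sum>n. real n * (cmod (cf f n))\<^sup>2)"
    unfolding dnorm_def using s nn by (simp add: sums_iff)
  show "summable (\<lambda>n. real n * (cmod (cf f n))\<^sup>2)" using s by (rule sums_summable)
qed




lemma induces_deriv:
  assumes ind: "induces u g"
  shows "g holomorphic_on disc" "\<And>\<zeta>. \<zeta> \<in> disc \<Longrightarrow> (\<lambda>k. u (int (Suc k)) * \<zeta> ^ k) sums deriv g \<zeta>"
proof -
  define c where "c = (\<lambda>n. u (int n) / of_real (mono_norm_sq n))"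
  have s: "\<And>z. z \<in> disc \<Longrightarrow> (\<lambda>n. c n * z ^ n) sums g z"
    using ind unfolding induces_def c_def by auto
  show hg: "g holomorphic_on disc"
    by (rule power_series_holomorphic[where a=c]) (use s in auto)
  have hd: "deriv g holomorphic_on disc" using hg by (rule holomorphic_deriv) auto
  have cg: "cf g n = c n" for n by (rule cf_unique[OF s])
  have "cf (deriv g) k = u (int (Suc k))" for k
    using cg[of "Suc k"] by (simp add: cf_deriv c_def mono_norm_sq_def del: of_nat_Suc)
  then show "\<And>\<zeta>. \<zeta> \<in> disc \<Longrightarrow> (\<lambda>k. u (int (Suc k)) * \<zeta> ^ k) sums deriv g \<zeta>"
    using cf_series[OF hd] by simp
qed

lemma formula_disc:
  assumes f: "f \<in> dirichlet_space" and z: "z \<in> disc" and B: "\<And>m::nat. cmod (u (int m)) \<le> B"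
    and dg: "\<And>\<zeta>. \<zeta> \<in> disc \<Longrightarrow> (\<lambda>k. u (int (Suc k)) * \<zeta> ^ k) sums dg \<zeta>"
  shows "(\<lambda>k. u (int (Suc k)) * z ^ k * (pi * cf f (Suc k))) sums (LINT w:disc|lborel. deriv f w * dg (z * cnj w))"
proof -
  define F where "F = (\<lambda>k w. indicator disc w *\<^sub>R (deriv f w * (u (int (Suc k)) * (z * cnj w) ^ k)))"
  have B0: "B \<ge> 0" using B[of 0] norm_ge_zero[of "u 0"] by (simp del: norm_ge_zero)
  have zw: "norm (z * cnj w) < 1" if "w \<in> disc" for w
  proof -
    have "norm (z * cnj w) = norm z * norm w" by (simp add: norm_mult)
    also have "\<dots> \<le> norm w" using z by (intro mult_left_le_one_le) auto
    also have "\<dots> < 1" using that by simp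
    finally show ?thesis .
  qed
  have bnd: "norm (u (int (Suc k)) * (z * cnj w) ^ k) \<le> B * norm z ^ k" if "w \<in> disc" for k w
  proof -
    have "norm ((z * cnj w) ^ k) \<le> norm z ^ k"
      using that by (simp add: norm_mult norm_power power_mult_distrib) (intro mult_left_le power_le_one, auto)
    then show ?thesis unfolding norm_mult by (intro mult_mono B) (auto simp: B0)
  qed
  have intF: "integrable lborel (F k)" for k
  proof -
    have "set_integrable lborel disc (\<lambda>w. deriv f w * (u (int (Suc k)) * (z * cnj w) ^ k))"
      by (rule deriv_times_integrable[OF f _ bnd]) (intro continuous_intros)
    then show ?thesis unfolding set_integrable_def F_def .
  qed
  have int1: "set_integrable lborel disc (\<lambda>w. deriv f w * 1)"
    by (rule deriv_times_integrable[OF f, where K=1]) auto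
  define I1 where "I1 = integral\<^sup>L lborel (\<lambda>w. indicator disc w * norm (deriv f w))"
  have int1': "integrable lborel (\<lambda>w. indicator disc w * norm (deriv f w))"
    using integrable_norm[OF int1[unfolded set_integrable_def]] by (simp add: norm_mult)
  have normF: "norm (F k w) \<le> indicator disc w * (B * norm z ^ k * norm (deriv f w))" for k w
  proof (cases "w \<in> disc")
    case True
    have "norm (deriv f w * (u (int (Suc k)) * (z * cnj w) ^ k)) \<le> norm (deriv f w) * (B * norm z ^ k)"
      unfolding norm_mult[of "deriv f w"] by (rule mult_left_mono[OF bnd[OF True] norm_ge_zero])
    then show ?thesis using True unfolding F_def by (simp add: mult_ac)
  qed (simp add: F_def)
  have gz: "summable (\<lambda>k. norm z ^ k)" using z by (intro summable_geometric) simp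
  have AE: "AE w in lborel. summable (\<lambda>k. norm (F k w))"
  proof (rule AE_I2)
    fix w
    have "summable (\<lambda>k. indicator disc w * (B * norm (deriv f w)) * norm z ^ k)"
      by (intro summable_mult gz)
    then show "summable (\<lambda>k. norm (F k w))"
      by (rule summable_comparison_test[rotated]) (use normF in \<open>auto simp: mult_ac\<close>)
  qed
  have sI: "summable (\<lambda>k. integral\<^sup>L lborel (\<lambda>w. norm (F k w)))"
  proof (rule summable_comparison_test[where g="\<lambda>k. B * I1 * norm z ^ k"])
    show "summable (\<lambda>k. B * I1 * norm z ^ k)" by (intro summable_mult gz)
    show "\<exists>N. \<forall>k\<ge>N. norm (integral\<^sup>L lborel (\<lambda>w. norm (F k w))) \<le> B * I1 * norm z ^ k"
    proof (intro exI allI impI)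
      fix k :: nat
      have "integral\<^sup>L lborel (\<lambda>w. norm (F k w)) \<le> integral\<^sup>L lborel (\<lambda>w. (B * norm z ^ k) * (indicator disc w * norm (deriv f w)))"
        by (intro integral_mono integrable_norm intF Bochner_Integration.integrable_mult_right int1')
           (use normF in \<open>auto simp: mult_ac\<close>)
      also have "\<dots> = B * I1 * norm z ^ k" by (simp add: I1_def mult_ac)
      finally show "norm (integral\<^sup>L lborel (\<lambda>w. norm (F k w))) \<le> B * I1 * norm z ^ k"
        by (simp add: integral_nonneg)
    qed
  qed
  have "(\<lambda>k. integral\<^sup>L lborel (F k)) sums (\<integral>w. (\<Sum>k. F k w) \<partial>lborel)"
    by (rule sums_integral[OF intF AE sI])
  moreover have "integral\<^sup>L lborel (F k) = u (int (Suc k)) * z ^ k * (pi * cf f (Suc k))" for k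
  proof -
    have "integral\<^sup>L lborel (F k) = (LINT w:disc|lborel. (u (int (Suc k)) * z ^ k) * (deriv f w * cnj w ^ k))"
      unfolding F_def set_lebesgue_integral_def by (simp add: power_mult_distrib mult_ac)
    also have "\<dots> = u (int (Suc k)) * z ^ k * (pi * cf f (Suc k))"
      by (simp add: disc_moment[OF f])
    finally show ?thesis .
  qed
  moreover have "(\<Sum>k. F k w) = indicator disc w *\<^sub>R (deriv f w * dg (z * cnj w))" for w
  proof (cases "w \<in> disc")
    case True
    have "(\<lambda>k. u (int (Suc k)) * (z * cnj w) ^ k) sums dg (z * cnj w)" using dg zw[OF True] by simp
    then have "(\<lambda>k. deriv f w * (u (int (Suc k)) * (z * cnj w) ^ k)) sums (deriv f w * dg (z * cnj w))"
      by (rule sums_mult)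
    then show ?thesis using True by (simp add: F_def sums_iff)
  qed (simp add: F_def)
  ultimately show ?thesis by (simp add: set_lebesgue_integral_def)
qed




lemma D_intro:
  assumes h: "h holomorphic_on disc" and out: "\<And>z. z \<notin> disc \<Longrightarrow> h z = 0"
    and G: "set_integrable lborel disc G" and bnd: "\<And>w. w \<in> disc \<Longrightarrow> (cmod (deriv h w))\<^sup>2 \<le> G w"
  shows "h \<in> dirichlet_space"
proof -
  have hd: "deriv h holomorphic_on disc" using h by (rule holomorphic_deriv) auto
  then have cd: "continuous_on disc (\<lambda>w. (cmod (deriv h w))\<^sup>2)"
    by (intro continuous_intros holomorphic_on_imp_continuous_on)
  have "set_integrable lborel disc (\<lambda>z. (cmod (deriv h z))\<^sup>2)"
    unfolding set_integrable_def
  proof (rule Bochner_Integration.integrable_bound)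
    show "integrable lborel (\<lambda>w. indicator disc w *\<^sub>R G w)" using G unfolding set_integrable_def .
    show "(\<lambda>w. indicator disc w *\<^sub>R (cmod (deriv h w))\<^sup>2) \<in> borel_measurable lborel"
      using borel_measurable_continuous_on_indicator[OF _ cd] by simp
    show "AE w in lborel. norm (indicator disc w *\<^sub>R (cmod (deriv h w))\<^sup>2) \<le> norm (indicator disc w *\<^sub>R G w)"
    proof (rule AE_I2)
      fix w :: complex
      show "norm (indicator disc w *\<^sub>R (cmod (deriv h w))\<^sup>2) \<le> norm (indicator disc w *\<^sub>R G w)"
      proof (cases "w \<in> disc")
        case True
        then show ?thesis using bnd[OF True] by auto
      qed simp
    qed
  qed
  then show ?thesis using h out by (simp add: dirichlet_space_def)
qed

lemma const_integrable_disc: "set_integrable lborel disc (\<lambda>w::complex. (K::real))"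
  unfolding set_integrable_def using emeasure_lborel_ball_finite[of "0::complex" 1]
  by (simp add: integrable_indicator_iff)

lemma D_add:
  assumes f: "f \<in> dirichlet_space" and g: "g \<in> dirichlet_space"
  shows "(\<lambda>z. f z + g z) \<in> dirichlet_space"
proof (rule D_intro[where G="\<lambda>w. 2 * (cmod (deriv f w))\<^sup>2 + 2 * (cmod (deriv g w))\<^sup>2"])
  show "(\<lambda>z. f z + g z) holomorphic_on disc" using D_holo[OF f] D_holo[OF g] by (rule holomorphic_on_add)
  show "set_integrable lborel disc (\<lambda>w. 2 * (cmod (deriv f w))\<^sup>2 + 2 * (cmod (deriv g w))\<^sup>2)"
    using D_int[OF f] D_int[OF g] by (intro set_integral_add set_integrable_mult_right) auto
  fix w :: complex assume w: "w \<in> disc"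
  have "f field_differentiable at w" "g field_differentiable at w"
    using D_holo[OF f] D_holo[OF g] w by (auto intro: holomorphic_on_imp_differentiable_at)
  then have "deriv (\<lambda>z. f z + g z) w = deriv f w + deriv g w" by simp
  moreover have "(cmod (a + b))\<^sup>2 \<le> 2 * (cmod a)\<^sup>2 + 2 * (cmod b)\<^sup>2" for a b :: complex
  proof -
    have "cmod (a + b) \<le> cmod a + cmod b" by (rule norm_triangle_ineq)
    then have "(cmod (a + b))\<^sup>2 \<le> (cmod a + cmod b)\<^sup>2" by (intro power_mono) auto
    also have "\<dots> \<le> 2 * (cmod a)\<^sup>2 + 2 * (cmod b)\<^sup>2"
      using sum_squares_bound[of "cmod a" "cmod b"] by (simp add: power2_eq_square algebra_simps)
    finally show ?thesis .
  qed
  ultimately show "(cmod (deriv (\<lambda>z. f z + g z) w))\<^sup>2 \<le> 2 * (cmod (deriv f w))\<^sup>2 + 2 * (cmod (deriv g w))\<^sup>2"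
    by simp
qed (use D_out[OF f] D_out[OF g] in auto)

lemma D_scale:
  assumes f: "f \<in> dirichlet_space"
  shows "(\<lambda>z. c * f z) \<in> dirichlet_space"
proof (rule D_intro[where G="\<lambda>w. (cmod c)\<^sup>2 * (cmod (deriv f w))\<^sup>2"])
  show "(\<lambda>z. c * f z) holomorphic_on disc" using D_holo[OF f] by (intro holomorphic_on_mult holomorphic_on_const)
  show "set_integrable lborel disc (\<lambda>w. (cmod c)\<^sup>2 * (cmod (deriv f w))\<^sup>2)"
    using D_int[OF f] by (rule set_integrable_mult_right)
  fix w :: complex assume w: "w \<in> disc"
  have "f field_differentiable at w"
    using D_holo[OF f] w by (auto intro: holomorphic_on_imp_differentiable_at)
  then have "deriv (\<lambda>z. c * f z) w = c * deriv f w" by simp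
  then show "(cmod (deriv (\<lambda>z. c * f z) w))\<^sup>2 \<le> (cmod c)\<^sup>2 * (cmod (deriv f w))\<^sup>2"
    by (simp add: norm_mult power_mult_distrib)
qed (use D_out[OF f] in auto)

definition em :: "nat \<Rightarrow> complex \<Rightarrow> complex" where
  "em m = (\<lambda>z. if z \<in> disc then z ^ m else 0)"

lemma em_holo: "em m holomorphic_on disc"
  by (rule holomorphic_transform[of "\<lambda>z. z ^ m"]) (auto simp: em_def intro: holomorphic_intros)

lemma em_D: "em m \<in> dirichlet_space"
proof (rule D_intro[where G="\<lambda>w. (real m)\<^sup>2"])
  show "em m holomorphic_on disc" by (rule em_holo)
  show "set_integrable lborel disc (\<lambda>w. (real m)\<^sup>2)" by (rule const_integrable_disc)
  fix w :: complex assume w: "w \<in> disc"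
  have ev: "eventually (\<lambda>z. em m z = z ^ m) (nhds w)"
    using eventually_nhds_in_open[of disc w] w by (auto elim!: eventually_mono simp: em_def)
  have "deriv (em m) w = deriv (\<lambda>z. z ^ m) w" by (rule deriv_cong_ev[OF ev refl])
  also have "\<dots> = of_nat m * w ^ (m - 1)" by (rule DERIV_imp_deriv) (rule derivative_eq_intros refl | simp)+
  finally have "cmod (deriv (em m) w) \<le> real m"
    using w by (simp add: norm_mult norm_power power_le_one mult_left_le)
  then show "(cmod (deriv (em m) w))\<^sup>2 \<le> (real m)\<^sup>2" by (intro power_mono) auto
qed (auto simp: em_def)

lemma D_rot:
  assumes f: "f \<in> dirichlet_space" and l: "cmod l = 1"
  shows "rot l f \<in> dirichlet_space"
proof (rule D_intro[where G="\<lambda>w. (cmod (deriv f (l * w)))\<^sup>2"])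
  have lw: "l * w \<in> disc \<longleftrightarrow> w \<in> disc" for w by (simp add: norm_mult l)
  show "rot l f holomorphic_on disc"
  proof -
    have "(f \<circ> (\<lambda>w. l * w)) holomorphic_on disc"
      by (rule holomorphic_on_compose_gen[OF _ D_holo[OF f]]) (use lw in \<open>auto intro: holomorphic_intros\<close>)
    then show ?thesis by (simp add: rot_def o_def)
  qed
  show "\<And>z. z \<notin> disc \<Longrightarrow> rot l f z = 0" using D_out[OF f] lw by (simp add: rot_def)
  show "set_integrable lborel disc (\<lambda>w. (cmod (deriv f (l * w)))\<^sup>2)"
  proof -
    define G where "G = (\<lambda>w. indicator disc w *\<^sub>R (cmod (deriv f w))\<^sup>2)"
    have hd: "deriv f holomorphic_on disc" using D_holo[OF f] by (rule holomorphic_deriv) auto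
    have cd: "continuous_on disc (\<lambda>w. (cmod (deriv f w))\<^sup>2)"
      using hd by (intro continuous_intros holomorphic_on_imp_continuous_on)
    have Gm: "G \<in> borel_measurable borel"
      unfolding G_def using borel_measurable_continuous_on_indicator[OF _ cd] by simp
    have "integrable lborel G" using D_int[OF f] unfolding set_integrable_def G_def .
    then have "integrable (distr lborel borel (\<lambda>w. l * w)) G" by (simp add: distr_rot_lborel[OF l])
    then have "integrable lborel (\<lambda>w. G (l * w))"
      by (subst (asm) integrable_distr_eq) (use Gm in auto)
    then show ?thesis unfolding set_integrable_def G_def
      by (simp add: lw indicator_def norm_mult l)
  qed
  fix w :: complex assume w: "w \<in> disc"
  then have "l * w \<in> disc" using lw by simp
  then have "(f has_field_derivative deriv f (l * w)) (at (l * w))"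
    using D_holo[OF f] by (auto intro!: DERIV_deriv_iff_field_differentiable[THEN iffD2] holomorphic_on_imp_differentiable_at)
  then have "((\<lambda>z. f (l * z)) has_field_derivative deriv f (l * w) * l) (at w)"
    using DERIV_chain2[of f "deriv f (l * w)" "\<lambda>z. l * z" w l] by (auto intro!: derivative_eq_intros)
  then have "deriv (rot l f) w = deriv f (l * w) * l" unfolding rot_def by (rule DERIV_imp_deriv)
  then show "(cmod (deriv (rot l f) w))\<^sup>2 \<le> (cmod (deriv f (l * w)))\<^sup>2" by (simp add: norm_mult l)
qed




lemma cf_add:
  assumes "f holomorphic_on disc" "g holomorphic_on disc"
  shows "cf (\<lambda>z. f z + g z) n = cf f n + cf g n"
proof -
  have "(\<lambda>n. (cf f n + cf g n) * z ^ n) sums (f z + g z)" if "z \<in> disc" for z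
    using sums_add[OF cf_series[OF assms(1) that] cf_series[OF assms(2) that]] by (simp add: distrib_right)
  then show ?thesis by (rule cf_unique)
qed

lemma cf_scale:
  assumes "f holomorphic_on disc"
  shows "cf (\<lambda>z. c * f z) n = c * cf f n"
proof -
  have "(\<lambda>n. (c * cf f n) * z ^ n) sums (c * f z)" if "z \<in> disc" for z
    using sums_mult[OF cf_series[OF assms that], of c] by (simp add: mult.assoc)
  then show ?thesis by (rule cf_unique)
qed

lemma cf_em: "cf (em m) n = (if n = m then 1 else 0)"
proof -
  have "(\<lambda>n. (if n = m then 1 else 0) * z ^ n) sums em m z" if "z \<in> disc" for z
  proof -
    have "(\<lambda>n. (if n = m then 1 else 0) * z ^ n) = (\<lambda>n. if n = m then z ^ m else 0)" by (rule ext) simp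
    then show ?thesis using sums_single[of m "\<lambda>_. z ^ m"] that by (simp add: em_def)
  qed
  then show ?thesis by (rule cf_unique)
qed

lemma cf_rot:
  assumes "f holomorphic_on disc" "cmod l = 1"
  shows "cf (rot l f) n = l ^ n * cf f n"
proof -
  have "(\<lambda>n. (l ^ n * cf f n) * z ^ n) sums rot l f z" if "z \<in> disc" for z
  proof -
    have "l * z \<in> disc" using that assms(2) by (simp add: norm_mult)
    from cf_series[OF assms(1) this] show ?thesis by (simp add: rot_def power_mult_distrib mult_ac)
  qed
  then show ?thesis by (rule cf_unique)
qed

lemma dnorm_nonneg: "dnorm f \<ge> 0"
proof -
  have "0 \<le> (LINT z:disc|lborel. (cmod (deriv f z))\<^sup>2)"
    unfolding set_lebesgue_integral_def by (intro Bochner_Integration.integral_nonneg) (auto simp: indicator_def)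
  then show ?thesis unfolding dnorm_def by simp
qed

lemma dnorm_scale:
  assumes f: "f \<in> dirichlet_space"
  shows "dnorm (\<lambda>z. c * f z) = cmod c * dnorm f"
proof -
  have cf: "(\<lambda>z. c * f z) \<in> dirichlet_space" by (rule D_scale[OF f])
  have "(dnorm (\<lambda>z. c * f z))\<^sup>2 = (cmod (c * f 0))\<^sup>2 + (\<Sum>n. real n * (cmod (cf (\<lambda>z. c * f z) n))\<^sup>2)"
    using dnorm_formula(1)[OF cf] by simp
  also have "\<dots> = (cmod c)\<^sup>2 * ((cmod (f 0))\<^sup>2 + (\<Sum>n. real n * (cmod (cf f n))\<^sup>2))"
    using suminf_mult[OF dnorm_formula(2)[OF f], of "(cmod c)\<^sup>2"]
    by (simp add: cf_scale[OF D_holo[OF f]] norm_mult power_mult_distrib algebra_simps)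
  also have "\<dots> = (cmod c * dnorm f)\<^sup>2" using dnorm_formula(1)[OF f] by (simp add: power_mult_distrib)
  finally show ?thesis using dnorm_nonneg[of "\<lambda>z. c * f z"] dnorm_nonneg[of f]
    by (simp add: power2_eq_iff_nonneg)
qed

lemma dnorm_em: "(dnorm (em m))\<^sup>2 = mono_norm_sq m"
proof -
  have "(\<lambda>n. real n * (cmod (cf (em m) n))\<^sup>2) sums real m"
  proof -
    have "(\<lambda>n. real n * (cmod (cf (em m) n))\<^sup>2) = (\<lambda>n. if n = m then real m else 0)" by (rule ext) (simp add: cf_em)
    then show ?thesis using sums_single[of m "\<lambda>_. real m"] by simp
  qed
  then show ?thesis using dnorm_formula(1)[OF em_D[of m]]
    by (simp add: sums_iff em_def mono_norm_sq_def)
qed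

lemma coeff_le_dnorm:
  assumes f: "f \<in> dirichlet_space"
  shows "cmod (cf f n) \<le> dnorm f"
proof -
  have "(cmod (cf f n))\<^sup>2 \<le> (dnorm f)\<^sup>2"
  proof (cases "n = 0")
    case True
    then show ?thesis using dnorm_formula[OF f] suminf_nonneg[OF dnorm_formula(2)[OF f]] by simp
  next
    case False
    have "(cmod (cf f n))\<^sup>2 \<le> real n * (cmod (cf f n))\<^sup>2" using False by (simp add: mult_le_cancel_right1)
    also have "\<dots> \<le> (\<Sum>n. real n * (cmod (cf f n))\<^sup>2)"
      using sum_le_suminf[OF dnorm_formula(2)[OF f], of "{n}"] by simp
    also have "\<dots> \<le> (dnorm f)\<^sup>2" using dnorm_formula(1)[OF f] by simp
    finally show ?thesis .
  qed
  then show ?thesis using dnorm_nonneg[of f] by (simp add: power2_le_iff_abs_le)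
qed

lemma point_eval:
  assumes f: "f \<in> dirichlet_space" and z: "z \<in> disc"
  shows "cmod (f z) \<le> dnorm f / (1 - cmod z)"
proof -
  have hf: "f holomorphic_on disc" by (rule D_holo[OF f])
  have z1: "cmod z < 1" using z by simp
  have sn: "summable (\<lambda>n. norm (cf f n * z ^ n))"
    using abs_summ[OF hf z1] by (simp add: norm_mult norm_power)
  have "f z = (\<Sum>n. cf f n * z ^ n)" using cf_series[OF hf z] by (simp add: sums_iff)
  then have "cmod (f z) \<le> (\<Sum>n. norm (cf f n * z ^ n))" using summable_norm[OF sn] by simp
  also have "\<dots> \<le> (\<Sum>n. dnorm f * cmod z ^ n)"
  proof (rule suminf_le)
    show "norm (cf f n * z ^ n) \<le> dnorm f * cmod z ^ n" for n
      using coeff_le_dnorm[OF f, of n] by (simp add: norm_mult norm_power mult_right_mono)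
    show "summable (\<lambda>n. dnorm f * cmod z ^ n)" using z1 by (intro summable_mult summable_geometric) simp
  qed (rule sn)
  also have "\<dots> = dnorm f / (1 - cmod z)"
    using suminf_geometric[of "cmod z"] z1 by (simp add: suminf_mult divide_simps)
  finally show ?thesis .
qed

lemma diag_formula:
  assumes ind: "induces u g" and B: "\<And>m::nat. cmod (u (int m)) \<le> B"
    and f: "f \<in> dirichlet_space" and z: "z \<in> disc"
  shows "(\<lambda>n. u (int n) * cf f n * z ^ n) sums
    (u 0 * f 0 + z * ((LINT w:disc|lborel. deriv f w * deriv g (z * cnj w)) / of_real pi))"
proof -
  define I where "I = (LINT w:disc|lborel. deriv f w * deriv g (z * cnj w))"
  have "(\<lambda>k. u (int (Suc k)) * z ^ k * (pi * cf f (Suc k))) sums I"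
    unfolding I_def by (rule formula_disc[OF f z B induces_deriv(2)[OF ind]])
  then have "(\<lambda>k. z / of_real pi * (u (int (Suc k)) * z ^ k * (pi * cf f (Suc k)))) sums (z / of_real pi * I)"
    by (rule sums_mult)
  then have "(\<lambda>k. u (int (Suc k)) * cf f (Suc k) * z ^ Suc k) sums (z * (I / of_real pi))"
    by (simp add: field_simps)
  then have "(\<lambda>n. u (int n) * cf f n * z ^ n) sums (z * (I / of_real pi) + u (int 0) * cf f 0 * z ^ 0)"
    by (subst (asm) sums_Suc_iff)
  then show ?thesis by (simp add: I_def add.commute)
qed




lemma lin_facts:
  assumes "linear_on_dirichlet R"
  shows "\<And>f. f \<in> dirichlet_space \<Longrightarrow> R f \<in> dirichlet_space"
    "\<And>f g. f \<in> dirichlet_space \<Longrightarrow> g \<in> dirichlet_space \<Longrightarrow> R (\<lambda>z. f z + g z) = (\<lambda>z. R f z + R g z)"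
    "\<And>f c. f \<in> dirichlet_space \<Longrightarrow> R (\<lambda>z. c * f z) = (\<lambda>z. c * R f z)"
  using assms unfolding linear_on_dirichlet_def by auto

lemma approx:
  assumes lin: "linear_on_dirichlet R" and C: "\<forall>f\<in>dirichlet_space. dnorm (R f) \<le> C * dnorm f"
    and Rem: "\<And>m. R (em m) = (\<lambda>z. lam m * em m z)" and f: "f \<in> dirichlet_space" and z: "z \<in> disc"
  shows "(\<lambda>n. lam n * cf f n * z ^ n) sums R f z"
proof -
  note RD = lin_facts(1)[OF lin] and Radd = lin_facts(2)[OF lin] and Rsc = lin_facts(3)[OF lin]
  have hf: "f holomorphic_on disc" by (rule D_holo[OF f])
  define p where "p = (\<lambda>N z. \<Sum>n<N. cf f n * em n z)"
  have p0: "p 0 = (\<lambda>z. 0 * em 0 z)" by (simp add: p_def)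
  have pS: "p (Suc N) = (\<lambda>z. p N z + cf f N * em N z)" for N by (simp add: p_def fun_eq_iff)
  have pD: "p N \<in> dirichlet_space" for N
  proof (induction N)
    case 0 show ?case unfolding p0 by (rule D_scale[OF em_D])
  next
    case (Suc N) show ?case unfolding pS by (rule D_add[OF Suc D_scale[OF em_D]])
  qed
  have Rp: "R (p N) = (\<lambda>z. \<Sum>n<N. cf f n * (lam n * em n z))" for N
  proof (induction N)
    case 0 show ?case unfolding p0 Rsc[OF em_D] by simp
  next
    case (Suc N)
    show ?case unfolding pS Radd[OF pD D_scale[OF em_D]] Rsc[OF em_D] Suc Rem
      by (simp add: fun_eq_iff)
  qed
  have cfp: "cf (p N) n = (if n < N then cf f n else 0)" for N n
  proof (induction N)
    case 0 show ?case unfolding p0 by (simp only: cf_scale[OF em_holo]) simp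
  next
    case (Suc N) show ?case unfolding pS
      by (simp add: cf_add[OF D_holo[OF pD] holomorphic_on_mult[OF holomorphic_on_const em_holo]]
          cf_scale[OF em_holo] cf_em Suc less_Suc_eq)
  qed
  define d where "d = (\<lambda>N z. f z + (-1) * p N z)"
  have dD: "d N \<in> dirichlet_space" for N unfolding d_def by (rule D_add[OF f D_scale[OF pD]])
  have Rd: "R (d N) = (\<lambda>z. R f z + (-1) * R (p N) z)" for N
    unfolding d_def Radd[OF f D_scale[OF pD]] Rsc[OF pD] ..
  have cfd: "cf (d N) n = (if n < N then 0 else cf f n)" for N n
    unfolding d_def by (simp only: cf_add[OF hf holomorphic_on_mult[OF holomorphic_on_const D_holo[OF pD]]]
          cf_scale[OF D_holo[OF pD]] cfp) simp
  define c where "c = (\<lambda>n. real n * (cmod (cf f n))\<^sup>2)"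
  have sc: "summable c" unfolding c_def by (rule dnorm_formula(2)[OF f])
  define E where "E = (\<lambda>N. (if N = 0 then (cmod (f 0))\<^sup>2 else 0) + (suminf c - (\<Sum>n<N. c n)))"
  have dE: "(dnorm (d N))\<^sup>2 = E N" for N
  proof -
    have "(\<lambda>n. c n - (if n < N then c n else 0)) sums (suminf c - (\<Sum>n\<in>{..<N}. if n < N then c n else 0))"
      by (intro sums_diff summable_sums sc sums_finite) auto
    moreover have "(\<lambda>n. real n * (cmod (cf (d N) n))\<^sup>2) = (\<lambda>n. c n - (if n < N then c n else 0))"
      by (rule ext) (simp add: cfd c_def)
    ultimately have "(\<lambda>n. real n * (cmod (cf (d N) n))\<^sup>2) sums (suminf c - (\<Sum>n<N. c n))"
      by simp
    moreover have "d N 0 = (if N = 0 then f 0 else 0)"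
      using cfd[of N 0] by (simp only: cf_0) simp
    ultimately show ?thesis using dnorm_formula(1)[OF dD[of N]] by (simp add: E_def sums_iff)
  qed
  have E0: "E \<longlonglongrightarrow> 0"
  proof -
    have "(\<lambda>N. suminf c - (\<Sum>n<N. c n)) \<longlonglongrightarrow> suminf c - suminf c"
      by (intro tendsto_diff tendsto_const summable_LIMSEQ sc)
    moreover have "eventually (\<lambda>N. E N = suminf c - (\<Sum>n<N. c n)) sequentially"
      using eventually_gt_at_top[of 0] by eventually_elim (simp add: E_def)
    ultimately show ?thesis by (simp add: tendsto_cong)
  qed
  have z1: "cmod z < 1" using z by simp
  define G where "G = (\<lambda>N. C * sqrt (E N) / (1 - cmod z))"
  have G0: "G \<longlonglongrightarrow> 0" unfolding G_def using E0 z1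
    by (auto intro!: tendsto_eq_intros)
  have "eventually (\<lambda>N. norm ((\<Sum>n<N. lam n * cf f n * z ^ n) - R f z) \<le> G N) sequentially"
  proof (intro always_eventually allI)
    fix N
    have "R (d N) z = R f z - (\<Sum>n<N. lam n * cf f n * z ^ n)"
      using z by (simp add: Rd Rp em_def mult_ac)
    then have "norm ((\<Sum>n<N. lam n * cf f n * z ^ n) - R f z) = norm (R (d N) z)"
      by (simp add: norm_minus_commute)
    also have "\<dots> \<le> dnorm (R (d N)) / (1 - cmod z)" by (rule point_eval[OF RD[OF dD] z])
    also have "\<dots> \<le> C * dnorm (d N) / (1 - cmod z)"
      using C dD[of N] z1 by (intro divide_right_mono) auto
    also have "dnorm (d N) = sqrt (E N)"
      using dE[of N] dnorm_nonneg[of "d N"] by (metis real_sqrt_abs abs_of_nonneg)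
    finally show "norm ((\<Sum>n<N. lam n * cf f n * z ^ n) - R f z) \<le> G N" by (simp add: G_def)
  qed
  from Lim_null_comparison[OF this G0]
  have "(\<lambda>N. (\<Sum>n<N. lam n * cf f n * z ^ n) - R f z) \<longlonglongrightarrow> 0" .
  then have "(\<lambda>N. \<Sum>n<N. lam n * cf f n * z ^ n) \<longlonglongrightarrow> R f z" by (simp add: LIM_zero_iff)
  then show ?thesis by (simp add: sums_def)
qed

lemma cis_trick:
  fixes n m :: nat assumes "n \<noteq> m"
  obtains l :: complex where "cmod l = 1" "l ^ n * cnj l ^ m = -1"
proof -
  define a where "a = pi / (real n - real m)"
  define l where "l = cis a"
  have "l ^ n * cnj l ^ m = cis (real n * a) * cis (- (real m * a))"
    by (simp add: l_def cis_cnj Complex.DeMoivre)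
  also have "\<dots> = cis ((real n - real m) * a)" by (simp add: cis_mult algebra_simps)
  also have "(real n - real m) * a = pi" using assms by (simp add: a_def)
  finally show ?thesis using that[of l] by (simp add: l_def)
qed

lemma radial_em:
  assumes lin: "linear_on_dirichlet R" and rad: "radial_on_dirichlet R"
  shows "R (em m) = (\<lambda>z. cf (R (em m)) m * em m z)"
proof -
  note RD = lin_facts(1)[OF lin] and Rsc = lin_facts(3)[OF lin]
  define h where "h = R (em m)"
  have hD: "h \<in> dirichlet_space" unfolding h_def by (rule RD[OF em_D])
  have hh: "h holomorphic_on disc" by (rule D_holo[OF hD])
  have rotem: "rot l (em m) = (\<lambda>z. l ^ m * em m z)" if "cmod l = 1" for l
    using that by (auto simp: rot_def em_def fun_eq_iff norm_mult power_mult_distrib)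
  have eq: "l ^ n * cf h n = l ^ m * cf h n" if l: "cmod l = 1" for l n
  proof -
    have "rot l h = R (rot l (em m))" using rad l em_D unfolding radial_on_dirichlet_def h_def by auto
    also have "\<dots> = (\<lambda>z. l ^ m * h z)" unfolding rotem[OF l] Rsc[OF em_D] h_def ..
    finally have "cf (rot l h) n = cf (\<lambda>z. l ^ m * h z) n" by simp
    then show ?thesis by (simp add: cf_rot[OF hh l] cf_scale[OF hh])
  qed
  have cfh: "cf h n = (if n = m then cf h m else 0)" for n
  proof (cases "n = m")
    case False
    obtain l where l: "cmod l = 1" "l ^ n * cnj l ^ m = -1" using cis_trick[OF False] .
    have lc: "l * cnj l = 1" using l(1) by (metis complex_norm_square of_real_1 power_one)
    have e: "l ^ n * cf h n = l ^ m * cf h n" by (rule eq[OF l(1)])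
    have "l ^ n * cnj l ^ m * cf h n = cnj l ^ m * (l ^ n * cf h n)" by (simp add: mult_ac)
    also have "\<dots> = cnj l ^ m * (l ^ m * cf h n)" by (simp only: e)
    also have "\<dots> = (l ^ m * cnj l ^ m) * cf h n" by (simp add: mult_ac)
    also have "l ^ m * cnj l ^ m = 1" by (simp add: power_mult_distrib[symmetric] lc)
    finally have "cf h n = 0" using l(2) by simp
    then show ?thesis using False by simp
  qed simp
  show ?thesis unfolding h_def[symmetric]
  proof (rule ext)
    fix z show "h z = cf h m * em m z"
    proof (cases "z \<in> disc")
      case True
      have "(\<lambda>n. cf h n * z ^ n) sums h z" by (rule cf_series[OF hh True])
      moreover have "(\<lambda>n. cf h n * z ^ n) = (\<lambda>n. if n = m then cf h m * z ^ m else 0)"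
        by (rule ext) (subst cfh, simp)
      ultimately have "(\<lambda>n. if n = m then cf h m * z ^ m else 0) sums h z" by simp
      moreover have "(\<lambda>n. if n = m then cf h m * z ^ m else 0) sums (cf h m * z ^ m)"
        using sums_single[of m "\<lambda>_. cf h m * z ^ m"] by simp
      ultimately show ?thesis using True by (simp add: sums_unique2 em_def)
    next
      case False
      then show ?thesis using D_out[OF hD] by (simp add: em_def)
    qed
  qed
qed




theorem theorem5p1:
  fixes R :: "(complex \<Rightarrow> complex) \<Rightarrow> (complex \<Rightarrow> complex)"
  assumes "linear_on_dirichlet R"
  shows "(bounded_on_dirichlet R \<and> radial_on_dirichlet R) \<longleftrightarrow>
    (\<exists>u g. periodic_distribution u \<and> (\<exists>B. \<forall>m::nat. cmod (u (int m)) \<le> B) \<and>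
       induces u g \<and> g holomorphic_on disc \<and>
       (\<forall>f\<in>dirichlet_space. \<forall>z\<in>disc.
          R f z = u 0 * f 0 +
            z * ((LINT w:disc|lborel. deriv f w * deriv g (z * cnj w)) / of_real pi)))"
proof
  note lin = assms
  note RD = lin_facts(1)[OF lin] and Radd = lin_facts(2)[OF lin] and Rsc = lin_facts(3)[OF lin]
  assume "bounded_on_dirichlet R \<and> radial_on_dirichlet R"
  then have bd: "bounded_on_dirichlet R" and rad: "radial_on_dirichlet R" by auto
  obtain C where C: "\<forall>f\<in>dirichlet_space. dnorm (R f) \<le> C * dnorm f"
    using bd unfolding bounded_on_dirichlet_def by blast
  define lam where "lam = (\<lambda>m. cf (R (em m)) m)"
  have Rem: "R (em m) = (\<lambda>z. lam m * em m z)" for m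
    unfolding lam_def by (rule radial_em[OF lin rad])
  have lamC: "cmod (lam m) \<le> C" for m
  proof -
    have pos: "dnorm (em m) > 0"
    proof -
      have "(dnorm (em m))\<^sup>2 > 0" using dnorm_em[of m] by (simp add: mono_norm_sq_def)
      then show ?thesis using dnorm_nonneg[of "em m"] by (metis less_eq_real_def power_zero_numeral zero_less_power2)
    qed
    have "cmod (lam m) * dnorm (em m) = dnorm (R (em m))"
      by (simp add: Rem dnorm_scale[OF em_D])
    also have "\<dots> \<le> C * dnorm (em m)" using C em_D by blast
    finally show ?thesis using pos by simp
  qed
  have C0: "C \<ge> 0" using lamC[of 0] norm_ge_zero[of "lam 0"] by (simp del: norm_ge_zero)
  define u where "u = (\<lambda>i::int. if 0 \<le> i then lam (nat i) else 0)"
  have u_nat [simp]: "u (int m) = lam m" for m by (simp add: u_def)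
  have uC: "cmod (u i) \<le> C" for i using lamC C0 by (simp add: u_def)
  define g where "g = (\<lambda>z. \<Sum>n. u (int n) / of_real (mono_norm_sq n) * z ^ n)"
  have ind: "induces u g"
    unfolding induces_def
  proof
    fix z :: complex assume z: "z \<in> disc"
    have "summable (\<lambda>n. u (int n) / of_real (mono_norm_sq n) * z ^ n)"
    proof (rule summable_comparison_test[where g="\<lambda>n. C * cmod z ^ n"])
      show "summable (\<lambda>n. C * cmod z ^ n)" using z by (intro summable_mult summable_geometric) simp
      show "\<exists>N. \<forall>n\<ge>N. norm (u (int n) / of_real (mono_norm_sq n) * z ^ n) \<le> C * cmod z ^ n"
      proof (intro exI allI impI)
        fix n :: nat
        have m1: "mono_norm_sq n \<ge> 1" by (simp add: mono_norm_sq_def)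
        have "cmod (u (int n) / of_real (mono_norm_sq n)) \<le> cmod (u (int n))"
          using m1 by (simp add: norm_divide divide_le_eq mult_le_cancel_left1)
        also have "\<dots> \<le> C" by (rule uC)
        finally have "cmod (u (int n) / of_real (mono_norm_sq n)) \<le> C" .
        then show "norm (u (int n) / of_real (mono_norm_sq n) * z ^ n) \<le> C * cmod z ^ n"
          unfolding norm_mult norm_power by (rule mult_right_mono) simp
      qed
    qed
    then show "(\<lambda>n. u (int n) / of_real (mono_norm_sq n) * z ^ n) sums g z"
      unfolding g_def by (rule summable_sums)
  qed
  show "\<exists>u g. periodic_distribution u \<and> (\<exists>B. \<forall>m::nat. cmod (u (int m)) \<le> B) \<and>
       induces u g \<and> g holomorphic_on disc \<and>
       (\<forall>f\<in>dirichlet_space. \<forall>z\<in>disc.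
          R f z = u 0 * f 0 +
            z * ((LINT w:disc|lborel. deriv f w * deriv g (z * cnj w)) / of_real pi))"
  proof (rule exI[of _ u], rule exI[of _ g], intro conjI ballI)
    show "periodic_distribution u" unfolding periodic_distribution_def
      by (rule exI[of _ C], rule exI[of _ 0]) (simp add: uC)
    show "\<exists>B. \<forall>m::nat. cmod (u (int m)) \<le> B" using uC by blast
    show "induces u g" by (rule ind)
    show "g holomorphic_on disc" by (rule induces_deriv(1)[OF ind])
    fix f z assume f: "f \<in> dirichlet_space" and z: "z \<in> disc"
    have s1: "(\<lambda>n. lam n * cf f n * z ^ n) sums R f z" by (rule approx[OF lin C Rem f z])
    have s2: "(\<lambda>n. u (int n) * cf f n * z ^ n) sums
      (u 0 * f 0 + z * ((LINT w:disc|lborel. deriv f w * deriv g (z * cnj w)) / of_real pi))"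
      by (rule diag_formula[OF ind _ f z]) (rule uC)
    show "R f z = u 0 * f 0 + z * ((LINT w:disc|lborel. deriv f w * deriv g (z * cnj w)) / of_real pi)"
      using s1 s2 by (simp add: sums_unique2)
  qed
next
  note lin = assms
  note RD = lin_facts(1)[OF lin] and Radd = lin_facts(2)[OF lin] and Rsc = lin_facts(3)[OF lin]
  assume "\<exists>u g. periodic_distribution u \<and> (\<exists>B. \<forall>m::nat. cmod (u (int m)) \<le> B) \<and>
       induces u g \<and> g holomorphic_on disc \<and>
       (\<forall>f\<in>dirichlet_space. \<forall>z\<in>disc.
          R f z = u 0 * f 0 +
            z * ((LINT w:disc|lborel. deriv f w * deriv g (z * cnj w)) / of_real pi))"
  then obtain u g where ex: "periodic_distribution u \<and> (\<exists>B. \<forall>m::nat. cmod (u (int m)) \<le> B) \<and>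
       induces u g \<and> g holomorphic_on disc \<and>
       (\<forall>f\<in>dirichlet_space. \<forall>z\<in>disc.
          R f z = u 0 * f 0 +
            z * ((LINT w:disc|lborel. deriv f w * deriv g (z * cnj w)) / of_real pi))"
    by (elim exE) 
  then have ind: "induces u g" and form: "\<And>f z. f \<in> dirichlet_space \<Longrightarrow> z \<in> disc \<Longrightarrow> R f z = u 0 * f 0 +
            z * ((LINT w:disc|lborel. deriv f w * deriv g (z * cnj w)) / of_real pi)"
    by auto
  from ex obtain B where B: "\<And>m::nat. cmod (u (int m)) \<le> B" by auto
  have B0: "B \<ge> 0" by (rule order_trans[OF norm_ge_zero B])
  have diag: "(\<lambda>n. u (int n) * cf f n * z ^ n) sums R f z" if f: "f \<in> dirichlet_space" and z: "z \<in> disc" for f z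
    using diag_formula[OF ind B f z] form[OF f z] by simp
  have cfR: "cf (R f) n = u (int n) * cf f n" if f: "f \<in> dirichlet_space" for f n
  proof (rule cf_unique)
    fix z :: complex assume "z \<in> disc"
    then show "(\<lambda>n. u (int n) * cf f n * z ^ n) sums R f z" by (rule diag[OF f])
  qed
  have "bounded_on_dirichlet R"
    unfolding bounded_on_dirichlet_def
  proof (intro exI ballI)
    fix f assume f: "f \<in> dirichlet_space"
    have Rf: "R f \<in> dirichlet_space" by (rule RD[OF f])
    have R0: "R f 0 = u 0 * f 0" using cfR[OF f, of 0] by simp
    have le1: "(\<Sum>n. real n * (cmod (cf (R f) n))\<^sup>2) \<le> (\<Sum>n. B\<^sup>2 * (real n * (cmod (cf f n))\<^sup>2))"
    proof (rule suminf_le)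
      fix n
      have "(cmod (u (int n)))\<^sup>2 \<le> B\<^sup>2" using B[of n] by (intro power_mono) auto
      then have "(cmod (u (int n)))\<^sup>2 * (real n * (cmod (cf f n))\<^sup>2) \<le> B\<^sup>2 * (real n * (cmod (cf f n))\<^sup>2)"
        by (rule mult_right_mono) auto
      then show "real n * (cmod (cf (R f) n))\<^sup>2 \<le> B\<^sup>2 * (real n * (cmod (cf f n))\<^sup>2)"
        by (simp add: cfR[OF f] norm_mult power_mult_distrib mult_ac)
    next
      show "summable (\<lambda>n. real n * (cmod (cf (R f) n))\<^sup>2)" by (rule dnorm_formula(2)[OF Rf])
      show "summable (\<lambda>n. B\<^sup>2 * (real n * (cmod (cf f n))\<^sup>2))" by (rule summable_mult[OF dnorm_formula(2)[OF f]])
    qed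
    have le0: "(cmod (R f 0))\<^sup>2 \<le> B\<^sup>2 * (cmod (f 0))\<^sup>2"
    proof -
      have "(cmod (u 0))\<^sup>2 \<le> B\<^sup>2" using B[of 0] by (intro power_mono) auto
      then show ?thesis unfolding R0 by (simp add: norm_mult power_mult_distrib mult_right_mono)
    qed
    have "(dnorm (R f))\<^sup>2 \<le> (B * dnorm f)\<^sup>2"
      using le0 le1 dnorm_formula(1)[OF Rf] dnorm_formula(1)[OF f]
        suminf_mult[OF dnorm_formula(2)[OF f], of "B\<^sup>2"]
      by (simp add: power_mult_distrib algebra_simps)
    then show "dnorm (R f) \<le> B * dnorm f"
      by (rule power2_le_imp_le) (use B0 dnorm_nonneg[of f] in simp)
  qed
  moreover have "radial_on_dirichlet R"
    unfolding radial_on_dirichlet_def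
  proof (intro allI impI ballI ext)
    fix l :: complex and f z assume l: "cmod l = 1" and f: "f \<in> dirichlet_space"
    have rf: "rot l f \<in> dirichlet_space" by (rule D_rot[OF f l])
    have lz: "l * z \<in> disc \<longleftrightarrow> z \<in> disc" by (simp add: norm_mult l)
    show "R (rot l f) z = rot l (R f) z"
    proof (cases "z \<in> disc")
      case True
      have "(\<lambda>n. u (int n) * cf (rot l f) n * z ^ n) sums R (rot l f) z" by (rule diag[OF rf True])
      moreover have "(\<lambda>n. u (int n) * cf (rot l f) n * z ^ n) = (\<lambda>n. u (int n) * cf f n * (l * z) ^ n)"
        by (rule ext) (simp add: cf_rot[OF D_holo[OF f] l] power_mult_distrib mult_ac)
      moreover have "(\<lambda>n. u (int n) * cf f n * (l * z) ^ n) sums R f (l * z)"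
        using True lz by (intro diag[OF f]) simp
      ultimately show ?thesis by (simp add: rot_def sums_unique2)
    next
      case False
      then show ?thesis using D_out[OF RD[OF rf]] D_out[OF RD[OF f], of "l * z"] lz
        by (simp add: rot_def)
    qed
  qed
  ultimately show "bounded_on_dirichlet R \<and> radial_on_dirichlet R" by blast
qed


end
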